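(* Let $p,q$ be odd primes with $q-p=2$, let $K=\mathbb{Q}(\sqrt{D})$ with $D\in\{-11,-19,-43,-67,-163\}$, and assume $p$ and $q$ are both inert in $K$. Let $\varepsilon\in\{1,-1\}$, $E=E_\varepsilon: y^2=x(x+\varepsilon p)(x+\varepsilon q)$, $E'=E'_\varepsilon: y^2=x^3-2\varepsilon(p+q)x^2+4x$. Then: (1) if $d\in K(S,2)$ satisfies one of (a) $p\mid d$, (b) $q\mid d$, (c) $d=-1$, then $d\notin S^{(\varphi)}(E/K)$; (2) (a) $2\in S^{(\varphi)}(E/K)$ iff $p\equiv 3\pmod 4$; (b) $-2\in S^{(\varphi)}(E/K)$ iff $p\equiv 1\pmod 4$; (1$'$) if $d\in K(S,2)$ satisfies $2\mid d$, then $d\notin S^{(\widehat\varphi)}(E'/K)$; (2$'$) $-1,p,q\in S^{(\widehat\varphi)}(E'/K)$.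
   Context: $\varphi:E\to E'$, $(x,y)\mapsto(y^2/x^2,y(pq-x^2)/x^2)$, and its dual $\widehat\varphi:E'\to E$, $(x,y)\mapsto(y^2/(4x^2),y(4-x^2)/(8x^2))$. Here $2$ is inert in $K$. Let $S=\{\infty\}\cup\{$primes of $K$ dividing $2pq\}$ and $K(S,2)=\{d\in K^*/K^{*2}:\ \mathrm{ord}_v(d)$ even for all $v\notin S\}=\langle -1,2,p,q\rangle$. The Selmer groups are identified with $S^{(\varphi)}(E/K)=\{d\in K(S,2): C_d(K_v)\neq\emptyset\ \forall v\in S\}$ and $S^{(\widehat\varphi)}(E'/K)=\{d\in K(S,2): C'_d(K_v)\neq\emptyset\ \forall v\in S\}$, where $C_d: dw^2=d^2-2\varepsilon(p+q)dz^2+4z^4$ and $C'_d: dw^2=d^2+\varepsilon(p+q)dz^2+pqz^4$. "$\pi\mid d$" means $\mathrm{ord}_\pi(d)$ is odd. *)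

theory Defs
  imports Complex_Main "HOL-Computational_Algebra.Primes" "HOL-Number_Theory.Cong"
begin

(* K = Q(sqrt D) realised inside the complex numbers, with O_K = Z[omega],
   omega = (1 + sqrt D)/2  (D = 1 mod 4, D < 0). *)
definition omega :: "int \<Rightarrow> complex" where
  "omega D = Complex (1/2) (sqrt (real_of_int (- D)) / 2)"

definition Kf :: "int \<Rightarrow> complex set" where
  "Kf D = {x. \<exists>a b :: rat. x = of_rat a + of_rat b * omega D}"

definition kcoord :: "int \<Rightarrow> complex \<Rightarrow> rat \<times> rat" where
  "kcoord D x = (SOME (a, b). x = of_rat a + of_rat b * omega D)"

(* a prime l is inert in K: the minimal polynomial X^2 - X + (1-D)/4 of omega
   is irreducible mod l (Dedekind-Kummer, O_K = Z[omega]) *)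
definition inert :: "int \<Rightarrow> nat \<Rightarrow> bool" where
  "inert D l \<longleftrightarrow> prime l \<and>
     \<not> (\<exists>x::int. [x^2 - x + (1 - D) div 4 = 0] (mod int l))"

definition qord :: "nat \<Rightarrow> rat \<Rightarrow> int" where
  "qord l r = (case quotient_of r of (a, b) \<Rightarrow>
      int (multiplicity (int l) a) - int (multiplicity (int l) b))"

(* ord_pi for the unique prime pi = (l) of K above an inert prime l:
   ord(a + b omega) = min(ord_l a, ord_l b) *)
definition ordv :: "int \<Rightarrow> nat \<Rightarrow> complex \<Rightarrow> int" where
  "ordv D l x = (case kcoord D x of (a, b) \<Rightarrow>
      if a = 0 then qord l b else if b = 0 then qord l a
      else min (qord l a) (qord l b))"

definition absv :: "int \<Rightarrow> nat \<Rightarrow> complex \<Rightarrow> real" where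
  "absv D l x = (if x = 0 then 0 else real l powr (- real_of_int (ordv D l x)))"

definition cauchy_v :: "int \<Rightarrow> nat \<Rightarrow> (nat \<Rightarrow> complex) \<Rightarrow> bool" where
  "cauchy_v D l s \<longleftrightarrow> (\<forall>e>0. \<exists>N. \<forall>m\<ge>N. \<forall>n\<ge>N. absv D l (s m - s n) < e)"

(* the curve d w^2 = g d z has a point over the completion K_v (v above inert l):
   there is a v-adically Cauchy sequence of K-points (z_n, w_n) (hence converging
   in K_v^2) whose residual tends to 0 v-adically, i.e. the limit is a K_v-point. *)
definition loc_sol :: "int \<Rightarrow> nat \<Rightarrow> (complex \<Rightarrow> complex \<Rightarrow> complex) \<Rightarrow> complex \<Rightarrow> bool" where
  "loc_sol D l g d \<longleftrightarrow> (\<exists>z w :: nat \<Rightarrow> complex.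
      (\<forall>n. z n \<in> Kf D \<and> w n \<in> Kf D) \<and> cauchy_v D l z \<and> cauchy_v D l w \<and>
      (\<lambda>n. absv D l (d * (w n)^2 - g d (z n))) \<longlonglongrightarrow> 0)"

(* the point over K_infinity = C *)
definition inf_sol :: "(complex \<Rightarrow> complex \<Rightarrow> complex) \<Rightarrow> complex \<Rightarrow> bool" where
  "inf_sol g d \<longleftrightarrow> (\<exists>z w :: complex. d * w^2 = g d z)"

(* K(S,2) = <-1, 2, p, q> inside K^*/K^*2; elements represented by d \<in> K^* *)
definition KS2 :: "int \<Rightarrow> nat \<Rightarrow> nat \<Rightarrow> complex set" where
  "KS2 D p q = {d \<in> Kf D. d \<noteq> 0 \<and> (\<exists>e a b c :: nat. \<exists>t \<in> Kf D. t \<noteq> 0 \<and>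
       d = (-1)^e * 2^a * (of_nat p)^b * (of_nat q)^c * t^2)}"

definition gphi :: "int \<Rightarrow> nat \<Rightarrow> nat \<Rightarrow> complex \<Rightarrow> complex \<Rightarrow> complex" where
  "gphi eps p q d z = d^2 - 2 * of_int eps * (of_nat p + of_nat q) * d * z^2 + 4 * z^4"

definition gphihat :: "int \<Rightarrow> nat \<Rightarrow> nat \<Rightarrow> complex \<Rightarrow> complex \<Rightarrow> complex" where
  "gphihat eps p q d z = d^2 + of_int eps * (of_nat p + of_nat q) * d * z^2
      + of_nat p * of_nat q * z^4"

(* S = {infinity, (2), (p), (q)} (2, p, q inert in K) *)
definition Sel_phi :: "int \<Rightarrow> int \<Rightarrow> nat \<Rightarrow> nat \<Rightarrow> complex set" where
  "Sel_phi D eps p q = {d \<in> KS2 D p q. inf_sol (gphi eps p q) d \<and>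
      (\<forall>l \<in> {2, p, q}. loc_sol D l (gphi eps p q) d)}"

definition Sel_phihat :: "int \<Rightarrow> int \<Rightarrow> nat \<Rightarrow> nat \<Rightarrow> complex set" where
  "Sel_phihat D eps p q = {d \<in> KS2 D p q. inf_sol (gphihat eps p q) d \<and>
      (\<forall>l \<in> {2, p, q}. loc_sol D l (gphihat eps p q) d)}"

end

theory Submission
  imports Defs "HOL-Number_Theory.Number_Theory"
begin

locale Kfield =
  fixes D :: int
  assumes Dneg: "D < 0" and Dmod: "D mod 4 = 1"
begin

definition m :: int where "m = (1 - D) div 4"

lemma m4: "4 * m = 1 - D"
  using Dmod unfolding m_def by presburger

lemma m_pos: "m > 0"
  using m4 Dneg by linarith

definition kel :: "rat \<Rightarrow> rat \<Rightarrow> complex" where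
  "kel a b = of_rat a + of_rat b * omega D"

definition beta :: real where "beta = sqrt (real_of_int (- D))"

lemma beta_pos: "beta > 0" using Dneg unfolding beta_def by simp

lemma beta_sq: "beta ^ 2 = - real_of_int D"
  using Dneg unfolding beta_def by simp

lemma omega_eq: "omega D = Complex (1/2) (beta / 2)"
  unfolding omega_def beta_def by simp

lemma of_rat_complex: "(of_rat a :: complex) = complex_of_real (of_rat a)"
proof -
  obtain n d where q: "quotient_of a = (n, d)" by (cases "quotient_of a") auto
  have "a = of_int n / of_int d" by (rule quotient_of_div[OF q])
  thus ?thesis by (simp add: of_rat_divide)
qed

lemma Re_kel: "Re (kel a b) = real_of_rat a + real_of_rat b / 2"
  unfolding kel_def omega_eq by (simp add: of_rat_complex)

lemma Im_kel: "Im (kel a b) = real_of_rat b * beta / 2"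
  unfolding kel_def omega_eq by (simp add: of_rat_complex)

lemma kel_inj: assumes "kel a b = kel c d" shows "a = c \<and> b = d"
proof -
  have "Im (kel a b) = Im (kel c d)" using assms by simp
  hence "real_of_rat b = real_of_rat d" using beta_pos unfolding Im_kel by simp
  hence bd: "b = d" by simp
  have "Re (kel a b) = Re (kel c d)" using assms by simp
  hence "real_of_rat a = real_of_rat c" using bd unfolding Re_kel by simp
  thus ?thesis using bd by simp
qed

lemma kcoord_kel [simp]: "kcoord D (kel a b) = (a, b)"
proof -
  have "\<exists>p. (case p of (a', b') \<Rightarrow> kel a b = of_rat a' + of_rat b' * omega D)"
    by (rule exI[of _ "(a,b)"]) (simp add: kel_def)
  hence "case kcoord D (kel a b) of (a', b') \<Rightarrow> kel a b = of_rat a' + of_rat b' * omega D"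
    unfolding kcoord_def by (rule someI_ex)
  hence "kel a b = kel (fst (kcoord D (kel a b))) (snd (kcoord D (kel a b)))"
    by (simp add: kel_def split: prod.splits)
  from kel_inj[OF this] show ?thesis by (simp add: prod_eq_iff)
qed

lemma Kf_iff: "x \<in> Kf D \<longleftrightarrow> (\<exists>a b. x = kel a b)"
  unfolding Kf_def kel_def by simp

lemma Kf_kcoord: assumes "x \<in> Kf D"
  shows "x = kel (fst (kcoord D x)) (snd (kcoord D x))"
  using assms unfolding Kf_iff by auto

lemma omega_sq: "omega D ^ 2 = omega D - of_int m"
proof -
  have "4 * real_of_int m = 1 - real_of_int D" using m4 by linarith
  thus ?thesis unfolding omega_eq
    by (simp add: power2_eq_square complex_eq_iff beta_sq[unfolded power2_eq_square] field_simps)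
qed

lemma kel_add: "kel a b + kel c d = kel (a+c) (b+d)"
  unfolding kel_def by (simp add: of_rat_add algebra_simps)

lemma kel_diff: "kel a b - kel c d = kel (a-c) (b-d)"
  unfolding kel_def by (simp add: of_rat_diff algebra_simps)

lemma kel_uminus: "- kel a b = kel (-a) (-b)"
  unfolding kel_def by (simp add: of_rat_minus algebra_simps)

lemma kel_mult: "kel a b * kel c d = kel (a*c - of_int m*b*d) (a*d+b*c+b*d)"
proof -
  have "kel a b * kel c d = of_rat a * of_rat c + (of_rat a * of_rat d + of_rat b * of_rat c) * omega D
     + of_rat b * of_rat d * omega D ^ 2"
    unfolding kel_def by (simp add: algebra_simps power2_eq_square)
  also have "\<dots> = kel (a*c - of_int m*b*d) (a*d+b*c+b*d)"
    unfolding omega_sq kel_def by (simp add: of_rat_add of_rat_mult of_rat_diff algebra_simps)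
  finally show ?thesis .
qed

lemma kel_zero_iff: "kel a b = 0 \<longleftrightarrow> a = 0 \<and> b = 0"
proof
  assume "kel a b = 0"
  hence "kel a b = kel 0 0" by (simp add: kel_def)
  thus "a = 0 \<and> b = 0" by (rule kel_inj)
qed (simp add: kel_def)

lemma kel_of_rat: "of_rat r = kel r 0" unfolding kel_def by simp

lemma of_int_kel: "of_int n = kel (of_int n) 0" unfolding kel_def by simp

lemma scal_kel: "of_rat r * kel a b = kel (r*a) (r*b)"
  unfolding kel_def by (simp add: of_rat_mult algebra_simps)

definition Nr :: "rat \<Rightarrow> rat \<Rightarrow> rat" where "Nr a b = a^2 + a*b + of_int m * b^2"

lemma Nr_pos: assumes "\<not>(a = 0 \<and> b = 0)" shows "Nr a b > 0"
proof -
  have mm: "of_int m \<ge> (1::rat)" using m_pos by simp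
  have "Nr a b = (a + b/2)^2 + (of_int m - 1/4) * b^2" unfolding Nr_def by (simp add: algebra_simps power2_eq_square)
  moreover have "(a + b/2)^2 + (of_int m - 1/4) * b^2 > 0"
  proof (cases "b = 0")
    case True then show ?thesis using assms by simp
  next
    case False
    hence "(of_int m - 1/4) * b^2 > 0" using mm by (intro mult_pos_pos) auto
    thus ?thesis by (rule add_nonneg_pos[rotated]) simp
  qed
  ultimately show ?thesis by simp
qed

lemma Nr_mult: "Nr (a*c - of_int m*b*d) (a*d+b*c+b*d) = Nr a b * Nr c d"
  unfolding Nr_def by (simp add: algebra_simps power2_eq_square)

lemma kel_inverse: assumes "\<not>(a = 0 \<and> b = 0)"
  shows "inverse (kel a b) = kel ((a+b) / Nr a b) (- b / Nr a b)"
proof -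
  have N: "Nr a b \<noteq> 0" using Nr_pos[OF assms] by simp
  have 1: "a*((a+b) / Nr a b) - of_int m*b*(- b / Nr a b) = 1"
    using N by (simp add: field_simps) (simp add: Nr_def algebra_simps power2_eq_square)
  have 2: "a*(- b / Nr a b) + b*((a+b) / Nr a b) + b*(- b / Nr a b) = 0"
    using N by (simp add: field_simps)
  have "kel a b * kel ((a+b) / Nr a b) (- b / Nr a b) = 1"
    unfolding kel_mult 1 2 by (simp add: kel_def)
  thus ?thesis by (rule inverse_unique)
qed

end

abbreviation "mu l (x::int) \<equiv> multiplicity (int l) x"

lemma qord_frac:
  assumes l: "prime l" and A: "A \<noteq> 0" and B: "B > 0"
  shows "qord l (of_int A / of_int B) = int (mu l A) - int (mu l B)"
proof -
  define r :: rat where "r = of_int A / of_int B"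
  obtain n d where q: "quotient_of r = (n, d)" by (cases "quotient_of r") auto
  have rd: "r = of_int n / of_int d" by (rule quotient_of_div[OF q])
  have d: "d > 0" by (rule quotient_of_denom_pos[OF q])
  have "r \<noteq> 0" using A B unfolding r_def by simp
  hence n: "n \<noteq> 0" using rd by auto
  have "rat_of_int A * of_int d = of_int n * of_int B"
    using rd B d unfolding r_def by (simp add: field_simps)
  hence eq: "A * d = n * B" by (metis of_int_eq_iff of_int_mult)
  have pl: "prime_elem (int l)" using l by simp
  have "mu l (A*d) = mu l (n*B)" using eq by simp
  hence "mu l A + mu l d = mu l n + mu l B"
    using prime_elem_multiplicity_mult_distrib[OF pl] A B d n by simp
  thus ?thesis using q unfolding r_def[symmetric] qord_def by simp
qed

lemma qord_int: assumes "prime l" "A \<noteq> 0" shows "qord l (of_int A) = int (mu l A)"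
  using qord_frac[OF assms, of 1] by simp

lemma rat_frac: fixes r :: rat obtains A B where "r = of_int A / of_int B" "B > 0"
proof -
  obtain n d where q: "quotient_of r = (n, d)" by (cases "quotient_of r") auto
  show ?thesis using that quotient_of_div[OF q] quotient_of_denom_pos[OF q] by blast
qed

lemma qord_mult: assumes l: "prime l" and "r \<noteq> 0" "s \<noteq> 0"
  shows "qord l (r * s) = qord l r + qord l s"
proof -
  obtain A B where r: "r = of_int A / of_int B" "B > 0" by (rule rat_frac)
  obtain C E where s: "s = of_int C / of_int E" "E > 0" by (rule rat_frac)
  have A: "A \<noteq> 0" and C: "C \<noteq> 0" using assms r s by auto
  have pl: "prime_elem (int l)" using l by simp
  have rs: "r * s = of_int (A*C) / of_int (B*E)" using r s by simp
  have BE: "B * E > 0" using r s by simp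
  have AC: "A * C \<noteq> 0" using A C by simp
  have "qord l (r*s) = int (mu l (A*C)) - int (mu l (B*E))"
    unfolding rs by (rule qord_frac[OF l AC BE])
  also have "\<dots> = qord l r + qord l s"
    using qord_frac[OF l A r(2)] qord_frac[OF l C s(2)] r s A C
      prime_elem_multiplicity_mult_distrib[OF pl] by simp
  finally show ?thesis .
qed

definition qge :: "nat \<Rightarrow> int \<Rightarrow> rat \<Rightarrow> bool" where
  "qge l k r \<longleftrightarrow> r = 0 \<or> qord l r \<ge> k"

lemma mu_ge_dvd: assumes l: "prime l" and "x \<noteq> 0" "int l ^ j dvd x" shows "j \<le> mu l x"
proof -
  have "prime (int l)" using l by simp
  hence "\<not> is_unit (int l)" using not_prime_unit by blast
  thus ?thesis using assms power_dvd_iff_le_multiplicity by blast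
qed

lemma qge_add: assumes l: "prime l" and "qge l k r" "qge l k s" shows "qge l k (r + s)"
proof (cases "r = 0 \<or> s = 0 \<or> r + s = 0")
  case True thus ?thesis using assms by (auto simp: qge_def)
next
  case False
  obtain A B where r: "r = of_int A / of_int B" "B > 0" by (rule rat_frac)
  obtain C E where s: "s = of_int C / of_int E" "E > 0" by (rule rat_frac)
  have A: "A \<noteq> 0" and C: "C \<noteq> 0" using False r s by auto
  have pl: "prime_elem (int l)" using l by simp
  have qr: "int (mu l A) - int (mu l B) \<ge> k" using assms(2) False qord_frac[OF l A r(2)] r by (simp add: qge_def)
  have qs: "int (mu l C) - int (mu l E) \<ge> k" using assms(3) False qord_frac[OF l C s(2)] s by (simp add: qge_def)
  have rs: "r + s = of_int (A*E + C*B) / of_int (B*E)" using r s by (simp add: field_simps)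
  have N: "A*E + C*B \<noteq> 0"
  proof
    assume "A*E + C*B = 0" hence "r + s = 0" using rs by simp
    thus False using False by simp
  qed
  define j where "j = min (mu l A + mu l E) (mu l C + mu l B)"
  have "int l ^ (mu l A + mu l E) dvd A * E"
    by (simp add: power_add mult_dvd_mono multiplicity_dvd)
  hence d1: "int l ^ j dvd A * E" unfolding j_def by (meson dvd_trans le_imp_power_dvd min.cobounded1)
  have "int l ^ (mu l C + mu l B) dvd C * B"
    by (simp add: power_add mult_dvd_mono multiplicity_dvd)
  hence d2: "int l ^ j dvd C * B" unfolding j_def by (meson dvd_trans le_imp_power_dvd min.cobounded2)
  have "j \<le> mu l (A*E + C*B)" using mu_ge_dvd[OF l N] d1 d2 by simp
  moreover have "qord l (r+s) = int (mu l (A*E + C*B)) - int (mu l (B*E))"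
    unfolding rs by (rule qord_frac[OF l N]) (use r s in simp)
  moreover have "mu l (B*E) = mu l B + mu l E"
    using prime_elem_multiplicity_mult_distrib[OF pl] r s by simp
  ultimately have "qord l (r+s) \<ge> int j - int (mu l B) - int (mu l E)" by simp
  moreover have "int j - int (mu l B) - int (mu l E) \<ge> k" using qr qs unfolding j_def by linarith
  ultimately show ?thesis by (simp add: qge_def)
qed

lemma qord_uminus: "qord l (- r) = qord l r"
proof -
  obtain n d where q: "quotient_of r = (n, d)" by (cases "quotient_of r") auto
  have "quotient_of (-r) = (-n, d)" using q by (simp add: rat_uminus_code)
  moreover have "mu l (-n) = mu l n"
    using multiplicity_times_unit_right[of "-1::int" "int l" n] by simp
  ultimately show ?thesis using q unfolding qord_def by simp
qed

lemma qge_uminus: "qge l k (- r) \<longleftrightarrow> qge l k r"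
  unfolding qge_def qord_uminus by simp

lemma qge_mult: assumes l: "prime l" and "qge l k r" "qge l j s" shows "qge l (k+j) (r * s)"
  using assms qord_mult[OF l, of r s] unfolding qge_def by (cases "r = 0 \<or> s = 0") auto

lemma inert_prim:
  assumes inert: "inert D l" and m: "4 * m = 1 - D" and nd: "\<not> (int l dvd A \<and> int l dvd B)"
  shows "\<not> int l dvd A^2 + A*B + m*B^2"
proof
  assume N: "int l dvd A^2 + A*B + m*B^2"
  have l: "prime l" using inert by (simp add: inert_def)
  hence pl: "prime (int l)" by simp
  have mdef: "(1 - D) div 4 = m" using m by simp
  show False
  proof (cases "int l dvd B")
    case True
    hence "int l dvd A*B + m*B^2" by (simp add: power2_eq_square)
    hence "int l dvd A^2" using N by (metis dvd_add_left_iff add.assoc)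
    hence "int l dvd A" using pl prime_dvd_power by blast
    thus False using nd True by simp
  next
    case False
    have "coprime (int l) B" using pl False by (rule prime_imp_coprime)
    hence "coprime B (int l)" by (simp add: coprime_commute)
    then obtain t where t: "[B * t = 1] (mod int l)" using cong_solve_coprime_int by blast
    hence lt: "int l dvd B*t - 1" by (simp add: cong_iff_dvd_diff)
    define x where "x = - A * t"
    have eq: "B^2 * (x^2 - x + m) = (A^2 + A*B + m*B^2) + (B*t - 1) * (A^2 * (B*t + 1) + A*B)"
      unfolding x_def by (simp add: algebra_simps power2_eq_square)
    have "int l dvd B^2 * (x^2 - x + m)" unfolding eq using N lt by simp
    hence "int l dvd B^2 \<or> int l dvd (x^2 - x + m)" using pl prime_dvd_mult_iff by blast
    moreover have "\<not> int l dvd B^2" using False pl prime_dvd_power by blast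
    ultimately have "int l dvd x^2 - x + m" by simp
    hence "[x^2 - x + (1 - D) div 4 = 0] (mod int l)" unfolding mdef by (simp add: cong_0_iff)
    thus False using inert unfolding inert_def by blast
  qed
qed

lemma norm_mu:
  assumes inert: "inert D l" and m: "4 * m = 1 - D" and nz: "\<not> (A = 0 \<and> B = 0)"
  shows "mu l (A^2 + A*B + m*B^2) =
     2 * (if A = 0 then mu l B else if B = 0 then mu l A else min (mu l A) (mu l B))"
proof -
  have l: "prime l" using inert by (simp add: inert_def)
  define k where "k = (if A = 0 then mu l B else if B = 0 then mu l A else min (mu l A) (mu l B))"
  have dA: "int l ^ k dvd A"
  proof (cases "A = 0")
    case False thus ?thesis unfolding k_def by (intro multiplicity_dvd') auto
  qed simp
  have dB: "int l ^ k dvd B"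
  proof (cases "B = 0")
    case False thus ?thesis unfolding k_def by (intro multiplicity_dvd') auto
  qed simp
  obtain A1 where A1: "A = int l ^ k * A1" using dA by blast
  obtain B1 where B1: "B = int l ^ k * B1" using dB by blast
  have nd: "\<not> (int l dvd A1 \<and> int l dvd B1)"
  proof
    assume h: "int l dvd A1 \<and> int l dvd B1"
    have d1: "int l ^ Suc k dvd A" "int l ^ Suc k dvd B" using h A1 B1 by (auto simp: mult_dvd_mono)
    have "k = mu l A \<and> A \<noteq> 0 \<or> k = mu l B \<and> B \<noteq> 0"
      using nz unfolding k_def by (auto simp: min_def)
    thus False
    proof
      assume "k = mu l A \<and> A \<noteq> 0" thus False using mu_ge_dvd[OF l, of A "Suc k"] d1 by simp
    next
      assume "k = mu l B \<and> B \<noteq> 0" thus False using mu_ge_dvd[OF l, of B "Suc k"] d1 by simp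
    qed
  qed
  have pk: "int l ^ (2*k) = int l ^ k * int l ^ k" by (simp add: power_add[symmetric] mult_2)
  have eq: "A^2 + A*B + m*B^2 = int l ^ (2*k) * (A1^2 + A1*B1 + m*B1^2)"
    unfolding A1 B1 pk by (simp add: algebra_simps power2_eq_square)
  have "mu l (A^2 + A*B + m*B^2) = 2*k"
    unfolding eq by (rule multiplicity_decomposeI[OF refl inert_prim[OF inert m nd]]) (use l in simp)
  thus ?thesis unfolding k_def .
qed

locale Kval = Kfield +
  fixes l :: nat
  assumes inert: "inert D l"
begin

lemma l_prime: "prime l" using inert by (simp add: inert_def)

abbreviation ord where "ord x \<equiv> ordv D l x"

lemma ord_kel: "ord (kel a b) = (if a = 0 then qord l b else if b = 0 then qord l a
      else min (qord l a) (qord l b))"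
  unfolding ordv_def by simp

lemma ord_norm:
  assumes nz: "\<not> (a = 0 \<and> b = 0)"
  shows "qord l (Nr a b) = 2 * ord (kel a b)"
proof -
  obtain A1 B1 where a: "a = of_int A1 / of_int B1" "B1 > 0" by (rule rat_frac)
  obtain C E where b: "b = of_int C / of_int E" "E > 0" by (rule rat_frac)
  define M where "M = B1 * E"
  define A where "A = A1 * E"
  define B where "B = C * B1"
  have M: "M > 0" unfolding M_def using a b by simp
  have aa: "a = of_int A / of_int M" unfolding A_def M_def using a b by simp
  have bb: "b = of_int B / of_int M" unfolding B_def M_def using a b by simp
  have a0: "a = 0 \<longleftrightarrow> A = 0" using aa M by simp
  have b0: "b = 0 \<longleftrightarrow> B = 0" using bb M by simp
  have nzAB: "\<not> (A = 0 \<and> B = 0)" using nz a0 b0 by simp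
  have NN: "Nr a b = of_int (A^2 + A*B + m*B^2) / of_int (M^2)"
    unfolding Nr_def aa bb using M by (simp add: field_simps power2_eq_square)
  have Nnz: "A^2 + A*B + m*B^2 \<noteq> 0"
  proof
    assume "A^2 + A*B + m*B^2 = 0" hence "Nr a b = 0" using NN by simp
    with Nr_pos[OF nz] show False by simp
  qed
  have pl: "prime_elem (int l)" using l_prime by simp
  have M2: "mu l (M^2) = 2 * mu l M" using prime_elem_multiplicity_power_distrib[OF pl] M by simp
  have q1: "qord l (Nr a b) = int (mu l (A^2 + A*B + m*B^2)) - int (mu l (M^2))"
    unfolding NN by (rule qord_frac[OF l_prime Nnz]) (use M in simp)
  have qa: "A \<noteq> 0 \<Longrightarrow> qord l a = int (mu l A) - int (mu l M)"
    unfolding aa by (rule qord_frac[OF l_prime _ M])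
  have qb: "B \<noteq> 0 \<Longrightarrow> qord l b = int (mu l B) - int (mu l M)"
    unfolding bb by (rule qord_frac[OF l_prime _ M])
  show ?thesis
    unfolding q1 norm_mu[OF inert m4 nzAB] M2 ord_kel a0 b0
    using qa qb nzAB by (auto simp: min_def)
qed

lemma Kf_cases: assumes "x \<in> Kf D" obtains a b where "x = kel a b"
  using assms Kf_iff by blast

lemma kel_in [simp]: "kel a b \<in> Kf D" using Kf_iff by blast

lemma ord_mult:
  assumes "x \<in> Kf D" "y \<in> Kf D" "x \<noteq> 0" "y \<noteq> 0"
  shows "ord (x * y) = ord x + ord y"
proof -
  obtain a b where x: "x = kel a b" using assms(1) Kf_cases by blast
  obtain c d where y: "y = kel c d" using assms(2) Kf_cases by blast
  have nx: "\<not> (a = 0 \<and> b = 0)" using assms(3) x kel_zero_iff by simp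
  have ny: "\<not> (c = 0 \<and> d = 0)" using assms(4) y kel_zero_iff by simp
  have xy: "x * y = kel (a*c - of_int m*b*d) (a*d+b*c+b*d)" unfolding x y kel_mult ..
  have nxy: "\<not> (a*c - of_int m*b*d = 0 \<and> a*d+b*c+b*d = 0)"
    using assms(3,4) xy kel_zero_iff by (metis mult_eq_0_iff)
  have "2 * ord (x*y) = qord l (Nr a b * Nr c d)"
    unfolding xy ord_norm[OF nxy, symmetric] Nr_mult ..
  also have "\<dots> = qord l (Nr a b) + qord l (Nr c d)"
    using qord_mult[OF l_prime] Nr_pos[OF nx] Nr_pos[OF ny] by simp
  also have "\<dots> = 2 * ord x + 2 * ord y" unfolding x y ord_norm[OF nx] ord_norm[OF ny] ..
  finally show ?thesis by simp
qed

definition vge :: "complex \<Rightarrow> int \<Rightarrow> bool" where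
  "vge x k \<longleftrightarrow> x = 0 \<or> ord x \<ge> k"

lemma vge_kel: "vge (kel a b) k \<longleftrightarrow> qge l k a \<and> qge l k b"
  unfolding vge_def qge_def ord_kel kel_zero_iff by auto

lemma Kf_add: "x \<in> Kf D \<Longrightarrow> y \<in> Kf D \<Longrightarrow> x + y \<in> Kf D"
  by (auto elim!: Kf_cases simp: kel_add)
lemma Kf_diff: "x \<in> Kf D \<Longrightarrow> y \<in> Kf D \<Longrightarrow> x - y \<in> Kf D"
  by (auto elim!: Kf_cases simp: kel_diff)
lemma Kf_uminus: "x \<in> Kf D \<Longrightarrow> - x \<in> Kf D"
  by (auto elim!: Kf_cases simp: kel_uminus)
lemma Kf_mult: "x \<in> Kf D \<Longrightarrow> y \<in> Kf D \<Longrightarrow> x * y \<in> Kf D"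
  by (auto elim!: Kf_cases simp: kel_mult)
lemma Kf_int [simp]: "of_int n \<in> Kf D" by (simp add: of_int_kel)
lemma Kf_nat [simp]: "of_nat n \<in> Kf D" using Kf_int[of "int n"] by simp
lemma Kf_numeral [simp]: "numeral n \<in> Kf D" using Kf_int[of "numeral n"] by simp
lemma Kf_0 [simp]: "0 \<in> Kf D" using Kf_int[of 0] by simp
lemma Kf_1 [simp]: "1 \<in> Kf D" using Kf_int[of 1] by simp
lemma Kf_omega [simp]: "omega D \<in> Kf D" using kel_in[of 0 1] by (simp add: kel_def)
lemma Kf_power: "x \<in> Kf D \<Longrightarrow> x ^ n \<in> Kf D" by (induction n) (auto intro: Kf_mult)
lemma Kf_inverse: assumes "x \<in> Kf D" shows "inverse x \<in> Kf D"
proof (cases "x = 0")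
  case False
  then obtain a b where x: "x = kel a b" using assms Kf_cases by blast
  hence "\<not> (a = 0 \<and> b = 0)" using False kel_zero_iff by simp
  hence "inverse x = kel ((a+b)/Nr a b) (-b/Nr a b)" unfolding x by (rule kel_inverse)
  thus ?thesis by simp
qed simp
lemma Kf_divide: "x \<in> Kf D \<Longrightarrow> y \<in> Kf D \<Longrightarrow> x / y \<in> Kf D"
  by (simp add: divide_inverse Kf_mult Kf_inverse)

lemmas Kf_intros = Kf_add Kf_diff Kf_uminus Kf_mult Kf_power Kf_inverse Kf_divide

lemma vge_add: assumes "x \<in> Kf D" "y \<in> Kf D" "vge x k" "vge y k" shows "vge (x + y) k"
proof -
  obtain a b where x: "x = kel a b" using assms(1) Kf_cases by blast
  obtain c d where y: "y = kel c d" using assms(2) Kf_cases by blast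
  show ?thesis using assms(3,4) unfolding x y kel_add vge_kel using qge_add[OF l_prime] by auto
qed

lemma ord_uminus: "x \<in> Kf D \<Longrightarrow> ord (- x) = ord x"
  by (auto elim!: Kf_cases simp: kel_uminus ord_kel qord_uminus)

lemma vge_uminus: "x \<in> Kf D \<Longrightarrow> vge (- x) k \<longleftrightarrow> vge x k"
  unfolding vge_def by (simp add: ord_uminus)

lemma vge_diff: assumes "x \<in> Kf D" "y \<in> Kf D" "vge x k" "vge y k" shows "vge (x - y) k"
  using vge_add[of x "-y" k] assms vge_uminus[of y] Kf_uminus by simp

lemma vge_mult: assumes "x \<in> Kf D" "y \<in> Kf D" "vge x k" "vge y j" shows "vge (x * y) (k + j)"
  using assms ord_mult[of x y] unfolding vge_def by (cases "x = 0 \<or> y = 0") auto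

lemma vge_mono: "vge x k \<Longrightarrow> j \<le> k \<Longrightarrow> vge x j" unfolding vge_def by auto

lemma vge_0 [simp]: "vge 0 k" unfolding vge_def by simp

lemma ord_int: assumes "n \<noteq> 0" shows "ord (of_int n) = int (mu l n)"
  unfolding of_int_kel ord_kel using assms qord_int[OF l_prime assms] by simp

lemma ord_1 [simp]: "ord 1 = 0" using ord_int[of 1] by simp

lemma vge_int: "vge (of_int n) 0"
  unfolding vge_def using ord_int by (cases "n = 0") auto

lemma ord_inverse: assumes "x \<in> Kf D" "x \<noteq> 0" shows "ord (inverse x) = - ord x"
proof -
  have "ord (x * inverse x) = ord x + ord (inverse x)"
    using assms by (intro ord_mult) (auto intro: Kf_inverse)
  thus ?thesis using assms by simp
qed

lemma ord_power: assumes "x \<in> Kf D" "x \<noteq> 0" shows "ord (x ^ n) = int n * ord x"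
  by (induction n) (use assms in \<open>auto simp: ord_mult Kf_power algebra_simps\<close>)

lemma vge_ord: "vge x (ord x)" unfolding vge_def by simp

lemma not_vge: "x \<noteq> 0 \<Longrightarrow> \<not> vge x (ord x + 1)" unfolding vge_def by simp

lemma ord_add_dom:
  assumes "x \<in> Kf D" "y \<in> Kf D" "x \<noteq> 0" "vge y (ord x + 1)"
  shows "x + y \<noteq> 0 \<and> ord (x + y) = ord x"
proof -
  have "x + y \<noteq> 0"
  proof
    assume "x + y = 0" hence "x = - y" by (simp add: eq_neg_iff_add_eq_0)
    hence "vge x (ord x + 1)" using assms vge_uminus by simp
    thus False using not_vge assms(3) by simp
  qed
  moreover have "vge (x + y) (ord x)" using assms vge_ord vge_mono by (intro vge_add) auto
  moreover have "\<not> vge (x + y) (ord x + 1)"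
  proof
    assume "vge (x + y) (ord x + 1)"
    hence "vge ((x + y) - y) (ord x + 1)" using assms by (intro vge_diff Kf_add) auto
    thus False using not_vge assms(3) by simp
  qed
  ultimately show ?thesis unfolding vge_def by auto
qed

lemma ord_add_ne:
  assumes "x \<in> Kf D" "y \<in> Kf D" "x \<noteq> 0" "y \<noteq> 0" "ord x \<noteq> ord y"
  shows "x + y \<noteq> 0 \<and> ord (x + y) = min (ord x) (ord y)"
proof (cases "ord x < ord y")
  case True
  hence "vge y (ord x + 1)" unfolding vge_def by simp
  hence "x + y \<noteq> 0 \<and> ord (x + y) = ord x" using ord_add_dom[of x y] assms by blast
  thus ?thesis using True by simp
next
  case False
  hence "vge x (ord y + 1)" using assms(5) unfolding vge_def by simp
  hence "y + x \<noteq> 0 \<and> ord (y + x) = ord y" using ord_add_dom[of y x] assms by blast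
  thus ?thesis using False by (simp add: add.commute)
qed

end

context Kval begin

lemma l_ge2: "real l \<ge> 2" using l_prime prime_ge_2_nat by simp

lemma absv_le: assumes "vge x k" shows "absv D l x \<le> real l powr (- real_of_int k)"
proof (cases "x = 0")
  case False
  hence "ord x \<ge> k" using assms unfolding vge_def by simp
  thus ?thesis using False l_ge2 unfolding absv_def by (simp add: powr_mono)
qed (simp add: absv_def)

lemma vge_of_absv: assumes "absv D l x < real l powr (- real_of_int k)" shows "vge x (k + 1)"
proof (cases "x = 0")
  case False
  hence "real l powr (- real_of_int (ord x)) < real l powr (- real_of_int k)"
    using assms unfolding absv_def by simp
  hence "- real_of_int (ord x) < - real_of_int k" using l_ge2 by (simp add: powr_less_cancel_iff)
  thus ?thesis unfolding vge_def by simp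
qed simp

lemma powr_tends: "(\<lambda>n. real l powr (- real n)) \<longlonglongrightarrow> 0"
proof -
  have "(\<lambda>n. (inverse (real l)) ^ n) \<longlonglongrightarrow> 0"
    using l_ge2 by (intro LIMSEQ_power_zero) (auto simp: inverse_less_1_iff)
  moreover have "\<And>n. real l powr (- real n) = (inverse (real l)) ^ n"
    using l_ge2 by (simp add: powr_minus powr_realpow power_inverse)
  ultimately show ?thesis by simp
qed

lemma exists_small: assumes "e > 0" shows "\<exists>N::nat. real l powr (- real N) < e"
  using powr_tends assms by (metis (no_types, lifting) LIMSEQ_D abs_of_nonneg diff_zero
      le_refl powr_ge_zero real_norm_def)

lemma cauchy_intro: assumes "\<And>m n. vge (s m - s n) (int (min m n))" shows "cauchy_v D l s"
  unfolding cauchy_v_def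
proof (intro allI impI)
  fix e :: real assume "e > 0"
  then obtain N::nat where N: "real l powr (- real N) < e" using exists_small by blast
  show "\<exists>N. \<forall>m\<ge>N. \<forall>n\<ge>N. absv D l (s m - s n) < e"
  proof (intro exI allI impI)
    fix m n assume "m \<ge> N" "n \<ge> N"
    hence "vge (s m - s n) (int N)" using assms[of m n] vge_mono by fastforce
    hence "absv D l (s m - s n) \<le> real l powr (- real N)" using absv_le by fastforce
    thus "absv D l (s m - s n) < e" using N by simp
  qed
qed

lemma loc_sol_intro:
  assumes K: "\<And>n. z n \<in> Kf D \<and> w n \<in> Kf D"
    and cz: "\<And>m n. vge (z m - z n) (int (min m n))"
    and cw: "\<And>m n. vge (w m - w n) (int (min m n))"
    and res: "\<And>n. vge (d * (w n)^2 - g d (z n)) (int n)"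
  shows "loc_sol D l g d"
  unfolding loc_sol_def
proof (intro exI conjI)
  show "\<forall>n. z n \<in> Kf D \<and> w n \<in> Kf D" using K by blast
  show "cauchy_v D l z" by (rule cauchy_intro[OF cz])
  show "cauchy_v D l w" by (rule cauchy_intro[OF cw])
  show "(\<lambda>n. absv D l (d * (w n)^2 - g d (z n))) \<longlonglongrightarrow> 0"
  proof (rule real_tendsto_sandwich[OF _ _ tendsto_const powr_tends])
    show "\<forall>\<^sub>F n in sequentially. 0 \<le> absv D l (d * (w n)\<^sup>2 - g d (z n))"
      by (simp add: absv_def)
    show "\<forall>\<^sub>F n in sequentially. absv D l (d * (w n)\<^sup>2 - g d (z n)) \<le> real l powr (- real n)"
      using absv_le[OF res] by simp
  qed
qed

lemma const_seq: "vge (c - c) k" by simp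

lemma not_loc_sol:
  assumes "\<And>z w. z \<in> Kf D \<Longrightarrow> w \<in> Kf D \<Longrightarrow>
              d * w^2 - g d z \<noteq> 0 \<and> ord (d * w^2 - g d z) \<le> N"
  shows "\<not> loc_sol D l g d"
proof
  assume "loc_sol D l g d"
  then obtain z w where K: "\<forall>n. z n \<in> Kf D \<and> w n \<in> Kf D"
    and lim: "(\<lambda>n. absv D l (d * (w n)^2 - g d (z n))) \<longlonglongrightarrow> 0"
    unfolding loc_sol_def by blast
  have "real l powr (- real_of_int N) > 0" using l_ge2 by simp
  then obtain n where "norm (absv D l (d * (w n)^2 - g d (z n)) - 0) < real l powr (- real_of_int N)"
    using LIMSEQ_D[OF lim] by blast
  hence "absv D l (d * (w n)^2 - g d (z n)) < real l powr (- real_of_int N)"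
    by (simp add: absv_def)
  hence "vge (d * (w n)^2 - g d (z n)) (N + 1)" by (rule vge_of_absv)
  thus False using assms[of "z n" "w n"] K unfolding vge_def by fastforce
qed

lemma vge_int_dvd: assumes "int l ^ j dvd n" shows "vge (of_int n) (int j)"
proof (cases "n = 0")
  case False
  thus ?thesis unfolding vge_def using ord_int[OF False] mu_ge_dvd[OF l_prime False assms] by simp
qed simp

lemma ord_int_unit: assumes "\<not> int l dvd n" shows "n \<noteq> 0 \<and> ord (of_int n) = 0"
proof -
  have "n \<noteq> 0" using assms by auto
  thus ?thesis using ord_int assms by (simp add: not_dvd_imp_multiplicity_0)
qed

end

context Kval begin

lemma ord_sq: "x \<in> Kf D \<Longrightarrow> x \<noteq> 0 \<Longrightarrow> ord (x^2) = 2 * ord x"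
  using ord_power[of x 2] by simp
lemma ord_4: "x \<in> Kf D \<Longrightarrow> x \<noteq> 0 \<Longrightarrow> ord (x^4) = 4 * ord x"
  using ord_power[of x 4] by simp

lemma L1:
  assumes d: "d \<in> Kf D" "d \<noteq> 0" "odd (ord d)" and c: "c \<in> Kf D" "vge c 0"
    and e: "e \<in> Kf D" "e \<noteq> 0" "ord e = 0" and z: "z \<in> Kf D" and w: "w \<in> Kf D"
  shows "d*w^2 - (d^2 + c*d*z^2 + e*z^4) \<noteq> 0 \<and> ord (d*w^2 - (d^2 + c*d*z^2 + e*z^4)) \<le> 2 * ord d"
proof -
  define G where "G = d^2 + c*d*z^2 + e*z^4"
  have KG: "G \<in> Kf D" unfolding G_def using d c e z by (intro Kf_intros) auto
  have G: "G \<noteq> 0 \<and> even (ord G) \<and> ord G \<le> 2 * ord d"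
  proof (cases "z = 0")
    case True
    hence "G = d^2" unfolding G_def by simp
    thus ?thesis using ord_sq[OF d(1,2)] d by simp
  next
    case False
    have o1: "ord (d^2) = 2 * ord d" using ord_sq[OF d(1,2)] .
    have ez: "e * z^4 \<noteq> 0" using e False by simp
    have o3: "ord (e * z^4) = 4 * ord z"
      using ord_mult[of e "z^4"] ord_4[OF z False] e z False by (simp add: Kf_power)
    have ne: "2 * ord d \<noteq> 4 * ord z" using d(3) by presburger
    have S: "d^2 + e*z^4 \<noteq> 0 \<and> ord (d^2 + e*z^4) = min (2 * ord d) (4 * ord z)"
      using ord_add_ne[of "d^2" "e*z^4"] o1 o3 ne ez d e z by (simp add: Kf_intros)
    have "vge (c*d*z^2) (0 + ord d + 2 * ord z)"
      using c d z by (intro vge_mult Kf_intros) (auto simp: vge_ord ord_sq[OF z False, symmetric])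
    moreover have "min (2 * ord d) (4 * ord z) + 1 \<le> 0 + ord d + 2 * ord z" using ne by linarith
    ultimately have v2: "vge (c*d*z^2) (ord (d^2 + e*z^4) + 1)" using S vge_mono by simp
    have "G = (d^2 + e*z^4) + c*d*z^2" unfolding G_def by simp
    hence "G \<noteq> 0 \<and> ord G = ord (d^2 + e*z^4)"
      using ord_add_dom[of "d^2 + e*z^4" "c*d*z^2"] S v2 d c e z by (simp add: Kf_intros)
    moreover have "even (min (2 * ord d) (4 * ord z))" by (simp add: min_def)
    ultimately show ?thesis using S by auto
  qed
  show ?thesis
  proof (cases "w = 0")
    case True
    thus ?thesis using G ord_uminus[OF KG] unfolding G_def[symmetric] by simp
  next
    case False
    have "ord (d*w^2) = ord d + 2 * ord w"
      using ord_mult[of d "w^2"] ord_sq[OF w False] d w False by (simp add: Kf_intros)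
    hence "ord (d*w^2) \<noteq> ord (- G)" using G ord_uminus[OF KG] d(3) by auto presburger
    hence "d*w^2 + - G \<noteq> 0 \<and> ord (d*w^2 + - G) = min (ord (d*w^2)) (ord (-G))"
      using ord_add_ne[of "d*w^2" "-G"] d w G False KG by (simp add: Kf_intros)
    thus ?thesis using G ord_uminus[OF KG] unfolding G_def[symmetric] by (simp add: min_le_iff_disj)
  qed
qed

lemma ord_two: assumes "l = 2" shows "ord (2::complex) = 1"
  using ord_int[of 2] assms by simp

lemma Lm1:
  assumes l2: "l = 2" and V: "V \<in> Kf D" and E: "E \<in> Kf D" "vge E 2"
  shows "V^2 + 1 + E \<noteq> 0 \<and> ord (V^2 + 1 + E) \<le> 1"
proof -
  define X where "X = V^2 + 1 + E"
  have KX: "X \<in> Kf D" unfolding X_def using V E by (intro Kf_intros) auto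
  have "\<not> vge X 2"
  proof
    assume X2: "vge X 2"
    have XE: "vge (X - E) 2" using X2 E KX by (intro vge_diff) auto
    have XE': "X - E = V^2 + 1" unfolding X_def by simp
    show False
    proof (cases "V = 0")
      case True
      hence "vge 1 2" using XE XE' by simp
      thus False unfolding vge_def by simp
    next
      case V0: False
      show False
      proof (cases "ord V = 0")
        case False
        have "V^2 + 1 \<noteq> 0 \<and> ord (V^2 + 1) = min (ord (V^2)) (ord 1)"
          using ord_add_ne[of "V^2" 1] V V0 False ord_sq[OF V V0] by (simp add: Kf_intros)
        hence "V^2 + 1 \<noteq> 0 \<and> ord (V^2 + 1) \<le> 0" by simp
        thus False using XE XE' unfolding vge_def by simp
      next
        case True
        have o2V: "ord (2*V) = 1" using ord_mult[of 2 V] V V0 True ord_two[OF l2] by simp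
        have "vge (X - E) (ord (2*V) + 1)" using XE o2V by simp
        hence "2*V + (X - E) \<noteq> 0 \<and> ord (2*V + (X - E)) = 1"
          using ord_add_dom[of "2*V" "X - E"] V V0 o2V KX E by (simp add: Kf_intros)
        moreover have "2*V + (X - E) = (V + 1)^2" unfolding XE' by (simp add: power2_eq_square algebra_simps)
        ultimately have "V + 1 \<noteq> 0" "ord ((V+1)^2) = 1" by auto
        thus False using ord_sq[of "V+1"] V by (simp add: Kf_intros) presburger
      qed
    qed
  qed
  thus ?thesis unfolding X_def[symmetric] vge_def by auto
qed

end

context Kval begin

declare Kf_add[simp] Kf_mult[simp] Kf_diff[simp] Kf_uminus[simp] Kf_power[simp] Kf_inverse[simp] Kf_divide[simp]

lemma vge_ofint: "int l ^ j dvd n \<Longrightarrow> vge (of_int n) (int j)" by (rule vge_int_dvd)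

lemma vge_ord_le: "x \<noteq> 0 \<Longrightarrow> k \<le> ord x \<Longrightarrow> vge x k" unfolding vge_def by simp

lemma vge_power: assumes "x \<in> Kf D" "vge x k" shows "vge (x^n) (int n * k)"
proof (induction n)
  case (Suc n)
  have "vge (x * x^n) (k + int n * k)" using assms Suc by (intro vge_mult Kf_intros) auto
  thus ?case by (simp add: algebra_simps)
qed (simp add: vge_def)

lemma L1c_inner:
  assumes l2: "l = 2" and k: "k = 4 * k1" and W: "W \<in> Kf D" and Z: "Z \<in> Kf D"
  shows "W^2 + 1 - of_int k * Z^2 + 4 * Z^4 \<noteq> 0 \<and> ord (W^2 + 1 - of_int k * Z^2 + 4 * Z^4) \<le> 1"
proof (cases "vge Z 0")
  case True
  define E where "E = - of_int k * Z^2 + 4 * Z^4"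
  have KE: "E \<in> Kf D" unfolding E_def using Z by (intro Kf_intros) auto
  have vk: "vge (of_int k) 2" using vge_ofint[of 2 k] l2 k by simp
  have v4: "vge (4::complex) 2" using vge_ofint[of 2 4] l2 by simp
  have z2: "vge (Z^2) 0" using vge_power[OF Z True, of 2] by simp
  have z4: "vge (Z^4) 0" using vge_power[OF Z True, of 4] by simp
  have "vge (- of_int k * Z^2) (2 + 0)"
    using vk z2 Z by (intro vge_mult Kf_intros) (auto simp: vge_uminus)
  moreover have "vge (4 * Z^4) (2 + 0)"
    using v4 z4 Z by (intro vge_mult Kf_intros) auto
  ultimately have "vge E 2" unfolding E_def using Z by (intro vge_add Kf_intros) auto
  from Lm1[OF l2 W KE this] show ?thesis unfolding E_def by (simp add: algebra_simps)
next
  case False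
  hence Z0: "Z \<noteq> 0" and oZ: "ord Z < 0" unfolding vge_def by auto
  define Y where "Y = 2 * Z^2"
  have KY: "Y \<in> Kf D" unfolding Y_def using Z by (intro Kf_intros) auto
  have Y0: "Y \<noteq> 0" unfolding Y_def using Z0 by simp
  have oY: "ord Y = 1 + 2 * ord Z" unfolding Y_def
    using ord_mult[of 2 "Z^2"] ord_two[OF l2] ord_sq[OF Z Z0] Z Z0 by (simp add: Kf_intros)
  define V where "V = W / Y"
  define E where "E = - of_int (2*k1) * inverse Y + (inverse Y)^2"
  have KV: "V \<in> Kf D" unfolding V_def using W KY by (intro Kf_intros)
  have KE: "E \<in> Kf D" unfolding E_def using KY by (auto intro!: Kf_intros)
  have oiY: "ord (inverse Y) = - 1 - 2 * ord Z" using ord_inverse[OF KY Y0] oY by simp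
  have viY: "vge (inverse Y) 1" using oiY oZ unfolding vge_def by simp
  have vk: "vge (- of_int (2*k1)) 1" using vge_ofint[of 1 "2*k1"] l2 vge_uminus by simp
  have "vge (- of_int (2*k1) * inverse Y) (1 + 1)"
    using vk viY KY by (intro vge_mult Kf_intros) auto
  moreover have "vge ((inverse Y)^2) (1 + 1)"
    using viY KY unfolding power2_eq_square by (intro vge_mult Kf_intros) auto
  ultimately have vE: "vge E 2" unfolding E_def using KY by (intro vge_add Kf_intros) auto
  have L: "V^2 + 1 + E \<noteq> 0 \<and> ord (V^2 + 1 + E) \<le> 1" by (rule Lm1[OF l2 KV KE vE])
  have eq: "W^2 + 1 - of_int k * Z^2 + 4 * Z^4 = Y^2 * (V^2 + 1 + E)"
    unfolding V_def E_def Y_def k using Z0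
    by (simp add: field_simps power2_eq_square power4_eq_xxxx)
  have KI: "V^2 + 1 + E \<in> Kf D" using KV KE by (intro Kf_intros) auto
  have "ord (Y^2 * (V^2 + 1 + E)) = 2 * ord Y + ord (V^2 + 1 + E)"
    using ord_mult[OF _ KI] ord_sq[OF KY Y0] KY Y0 L by (simp add: Kf_intros)
  thus ?thesis unfolding eq using L Y0 oY oZ by simp
qed

lemma L1c:
  assumes l2: "l = 2" and t: "t \<in> Kf D" "t \<noteq> 0" and k: "k = 4 * k1"
    and z: "z \<in> Kf D" and w: "w \<in> Kf D"
  shows "(-(t^2)) * w^2 - ((-(t^2))^2 + of_int k * (-(t^2)) * z^2 + 4 * z^4) \<noteq> 0 \<and>
         ord ((-(t^2)) * w^2 - ((-(t^2))^2 + of_int k * (-(t^2)) * z^2 + 4 * z^4)) \<le> 4 * ord t + 1"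
proof -
  define W where "W = w / t"
  define Z where "Z = z / t"
  have KW: "W \<in> Kf D" "Z \<in> Kf D" unfolding W_def Z_def using t z w by (auto intro: Kf_intros)
  define I where "I = W^2 + 1 - of_int k * Z^2 + 4 * Z^4"
  have KI: "I \<in> Kf D" unfolding I_def using KW by (intro Kf_intros) auto
  have I: "I \<noteq> 0 \<and> ord I \<le> 1" unfolding I_def by (rule L1c_inner[OF l2 k KW])
  have eq: "(-(t^2)) * w^2 - ((-(t^2))^2 + of_int k * (-(t^2)) * z^2 + 4 * z^4) = - (t^4 * I)"
    unfolding I_def W_def Z_def using t
    by (simp add: field_simps power2_eq_square power4_eq_xxxx)
  have "ord (t^4 * I) = 4 * ord t + ord I"
    using ord_mult[of "t^4" I] ord_4[OF t] KI I t by (simp add: Kf_intros)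
  thus ?thesis unfolding eq using I t KI ord_uminus[of "t^4 * I"] by (simp add: Kf_intros)
qed

end

context Kval begin

lemma vge_two: "l = 2 \<Longrightarrow> vge (2::complex) 1" using vge_ofint[of 1 2] by simp
lemma vge_four: "l = 2 \<Longrightarrow> vge (4::complex) 2" using vge_ofint[of 2 4] by simp
lemma vge_one: "vge (1::complex) 0" using vge_int[of 1] by simp

lemma XT_id: fixes y C :: complex
  shows "(1 + 2*y)^4 - 2*C*(1 + 2*y)^2 + 1 = 2 * ((1 - C) * (1 + 4*(y + y^2)) + 8 * (y + y^2)^2)"
  by (simp add: eval_nat_numeral ring_distribs algebra_simps)

lemma even_ne_int: "even (b::int) \<Longrightarrow> 2*a \<noteq> 1 + b" by presburger

lemma L2:
  assumes l2: "l = 2" and SG: "SG \<in> Kf D" "SG^2 = 1" and C: "C \<in> Kf D" "vge C 1"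
    and a: "vge (SG * (1 - C) + 1) 2" and z: "z \<in> Kf D" and w: "w \<in> Kf D"
  shows "2*SG*w^2 - 4*(z^4 - 2*C*z^2 + 1) \<noteq> 0 \<and> ord (2*SG*w^2 - 4*(z^4 - 2*C*z^2 + 1)) \<le> 4"
proof -
  have SG0: "SG \<noteq> 0" using SG by auto
  have oSG: "ord SG = 0" using ord_sq[OF SG(1) SG0] SG by simp
  have o2: "ord (2::complex) = 1" by (rule ord_two[OF l2])
  have m4: "multiplicity (2::int) 4 = 2" using multiplicity_prime_power[of "2::int" 2] by simp
  have o4: "ord (4::complex) = 2" using ord_int[of 4] l2 m4 by simp
  define X where "X = z^4 - 2*C*z^2 + 1"
  have KX: "X \<in> Kf D" unfolding X_def using z C by simp
  have vC2: "vge (2*C) (1 + 1)" using vge_two[OF l2] C by (intro vge_mult) auto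
  have z0C: "vge (2*C*z^2) 2" if vz: "vge z 0"
  proof -
    have v2: "vge (z^2) (int 2 * 0)" by (rule vge_power[OF z vz])
    have "vge ((2*C)*z^2) ((1 + 1) + int 2 * 0)" by (rule vge_mult[OF _ _ vC2 v2]) (use C z in simp_all)
    thus ?thesis by simp
  qed
  have A: "(X \<noteq> 0 \<and> even (ord X) \<and> ord X \<le> 0) \<or> vge (z - 1) 1"
  proof (cases "vge z 1")
    case True
    have "vge (z^4) (4 * 1)" using vge_power[OF z True, of 4] by simp
    hence "vge (z^4) 1" using vge_mono by fastforce
    moreover have "vge (2*C*z^2) 1" using z0C[OF vge_mono[OF True]] vge_mono by fastforce
    ultimately have "vge (z^4 - 2*C*z^2) (ord 1 + 1)" using z C by (simp add: vge_diff)
    hence "1 + (z^4 - 2*C*z^2) \<noteq> 0 \<and> ord (1 + (z^4 - 2*C*z^2)) = ord 1"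
      using z C by (intro ord_add_dom) auto
    hence "X \<noteq> 0 \<and> ord X = 0" unfolding X_def by (simp add: algebra_simps)
    thus ?thesis by simp
  next
    case False
    hence z0: "z \<noteq> 0" and oz1: "ord z \<le> 0" unfolding vge_def by auto
    show ?thesis
    proof (cases "ord z < 0")
      case True
      have o4z: "ord (z^4) = 4 * ord z" by (rule ord_4[OF z z0])
      have "vge 1 (4 * ord z + 1)" using True by (intro vge_ord_le) auto
      moreover have "vge ((2*C)*z^2) ((1 + 1) + ord (z^2))"
        by (rule vge_mult[OF _ _ vC2 vge_ord]) (use C z in simp_all)
      hence "vge (2*C*z^2) ((1 + 1) + 2 * ord z)" using ord_sq[OF z z0] by simp
      hence "vge (2*C*z^2) (4 * ord z + 1)" using True vge_mono by fastforce
      ultimately have "vge (1 - 2*C*z^2) (ord (z^4) + 1)" unfolding o4z using z C by (intro vge_diff) auto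
      hence "z^4 + (1 - 2*C*z^2) \<noteq> 0 \<and> ord (z^4 + (1 - 2*C*z^2)) = ord (z^4)"
        using z z0 C by (intro ord_add_dom) auto
      hence "X \<noteq> 0 \<and> ord X = 4 * ord z" unfolding X_def o4z by (simp add: algebra_simps)
      thus ?thesis using True by simp
    next
      case False
      hence oz: "ord z = 0" using oz1 by simp
      show ?thesis
      proof (cases "vge (z - 1) 1")
        case False
        have vz: "vge z 0" using oz unfolding vge_def by simp
        have "vge (z - 1) 0" using vz vge_one z by (intro vge_diff) auto
        hence zm: "z - 1 \<noteq> 0" "ord (z - 1) = 0" using False unfolding vge_def by auto
        have "vge 2 (ord (z - 1) + 1)" using zm vge_two[OF l2] by simp
        hence "(z - 1) + 2 \<noteq> 0 \<and> ord ((z - 1) + 2) = ord (z - 1)"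
          using zm z by (intro ord_add_dom) auto
        hence zp: "(z - 1) + 2 \<noteq> 0 \<and> ord ((z - 1) + 2) = 0" using zm by simp
        have zp': "z + 1 \<noteq> 0" "ord (z + 1) = 0" using zp by (simp_all add: algebra_simps)
        have "vge (2*z) (1 + 0)" by (rule vge_mult[OF _ z vge_two[OF l2] vz]) simp
        hence "vge (-(2*z)) (1 + 0)" using z by (simp add: vge_uminus)
        hence "vge (-(2*z)) (ord ((z+1)^2) + 1)" using ord_sq[of "z+1"] zp' z by simp
        hence "(z+1)^2 + (-(2*z)) \<noteq> 0 \<and> ord ((z+1)^2 + (-(2*z))) = ord ((z+1)^2)"
          using z zp' by (intro ord_add_dom) auto
        hence zq: "z^2 + 1 \<noteq> 0" "ord (z^2 + 1) = 0"
          using ord_sq[of "z+1"] zp' z by (simp_all add: algebra_simps power2_eq_square)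
        have f: "z^4 - 1 = (z - 1) * (z + 1) * (z^2 + 1)" by (simp add: algebra_simps power2_eq_square power4_eq_xxxx)
        have f0: "z^4 - 1 \<noteq> 0" unfolding f using zm zp' zq by simp
        have of: "ord (z^4 - 1) = 0" unfolding f using zm zp' zq z by (simp add: ord_mult)
        have "vge 2 1" using vge_two[OF l2] .
        moreover have "vge (2*C*z^2) 1" using z0C[OF vz] vge_mono by fastforce
        ultimately have "vge (2 - 2*C*z^2) (ord (z^4 - 1) + 1)" unfolding of using z C by (intro vge_diff) auto
        hence "(z^4 - 1) + (2 - 2*C*z^2) \<noteq> 0 \<and> ord ((z^4 - 1) + (2 - 2*C*z^2)) = ord (z^4 - 1)"
          using z C f0 by (intro ord_add_dom) auto
        hence "X \<noteq> 0 \<and> ord X = 0" unfolding X_def of by (simp add: algebra_simps)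
        thus ?thesis by simp
      qed simp
    qed
  qed
  have R: "2*SG*w^2 - 4*(z^4 - 2*C*z^2 + 1) = 2 * (SG * w^2 - 2*X)" unfolding X_def by (simp add: algebra_simps)
  have fin: "\<And>Q. Q \<in> Kf D \<Longrightarrow> Q \<noteq> 0 \<Longrightarrow> ord Q \<le> 3 \<Longrightarrow> 2 * Q \<noteq> 0 \<and> ord (2*Q) \<le> 4"
    using ord_mult[of 2] o2 by simp
  from A show ?thesis
  proof
    assume XA: "X \<noteq> 0 \<and> even (ord X) \<and> ord X \<le> 0"
    have o2X: "ord (-(2*X)) = 1 + ord X" using ord_mult[of 2 X] o2 XA KX ord_uminus[of "2*X"] by simp
    have KQ: "SG * w^2 - 2*X \<in> Kf D" using SG w KX by simp
    have "SG * w^2 - 2*X \<noteq> 0 \<and> ord (SG * w^2 - 2*X) \<le> 3"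
    proof (cases "w = 0")
      case True thus ?thesis using o2X XA by simp
    next
      case False
      have "ord (SG * w^2) = 2 * ord w" using ord_mult[of SG "w^2"] ord_sq[OF w False] oSG SG0 False SG w by simp
      hence "ord (SG * w^2) \<noteq> ord (-(2*X))" using o2X XA even_ne_int by simp
      hence "SG * w^2 + (-(2*X)) \<noteq> 0 \<and> ord (SG * w^2 + (-(2*X))) = min (ord (SG * w^2)) (ord (-(2*X)))"
        using SG0 False XA SG w KX by (intro ord_add_ne) auto
      thus ?thesis using o2X XA by (simp add: min_le_iff_disj)
    qed
    thus ?thesis unfolding R using fin KQ by blast
  next
    assume z1: "vge (z - 1) 1"
    define y where "y = (z - 1) * inverse 2"
    have Ky: "y \<in> Kf D" unfolding y_def using z by simp
    have vi: "vge (inverse 2) (-1)" using ord_inverse[of 2] o2 unfolding vge_def by simp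
    have "vge ((z - 1) * inverse 2) (1 + -1)" by (rule vge_mult[OF _ _ z1 vi]) (use z in simp_all)
    hence vy: "vge y 0" unfolding y_def by simp
    define s' where "s' = y + y^2"
    have Ks: "s' \<in> Kf D" unfolding s'_def using Ky by simp
    have vs: "vge s' 0" unfolding s'_def using Ky vy vge_power[OF Ky vy, of 2] by (intro vge_add) auto
    define a where "a = 1 - C"
    have Ka: "a \<in> Kf D" unfolding a_def using C by simp
    have "vge (-C) (ord (1::complex) + 1)" using C by (simp add: vge_uminus)
    hence a0: "a \<noteq> 0 \<and> ord a = 0" unfolding a_def using C ord_add_dom[of 1 "-C"] by simp
    define T where "T = a * (1 + 4*s') + 8 * s'^2"
    have KT: "T \<in> Kf D" unfolding T_def using Ka Ks by simp
    have zy: "z = 1 + 2*y" unfolding y_def by (simp add: field_simps)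
    have XT: "X = 2 * T" unfolding X_def T_def a_def s'_def zy by (rule XT_id)
    have va: "vge a 0" using vge_ord[of a] a0 by simp
    have v4a: "vge (4*a*s') (2 + 0 + 0)" using vge_four[OF l2] Ka Ks vs va
      by (intro vge_mult) auto
    have v8: "vge (8 * s'^2) (2 + 0)"
    proof -
      have "vge (8::complex) 2" using vge_ofint[of 3 8] l2 vge_mono[of 8 3 2] by simp
      thus ?thesis using vge_power[OF Ks vs, of 2] Ks by (intro vge_mult) auto
    qed
    have vT': "vge (4*a*s' + 8 * s'^2) (ord a + 1)" using v4a v8 a0 Ka Ks vge_mono
      by (intro vge_add) fastforce+
    have T0: "T \<noteq> 0 \<and> ord T = 0"
      using ord_add_dom[of a "4*a*s' + 8 * s'^2"] vT' a0 Ka Ks unfolding T_def by (simp add: algebra_simps)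
    have o4T: "ord (-(4*T)) = 2" using ord_mult[of 4 T] o4 T0 KT ord_uminus[of "4*T"] by simp
    have KQ: "SG * w^2 - 4*T \<in> Kf D" using SG w KT by simp
    have Q: "SG * w^2 - 4*T \<noteq> 0 \<and> ord (SG * w^2 - 4*T) \<le> 3"
    proof (cases "w = 0")
      case True thus ?thesis using o4T T0 by simp
    next
      case w0: False
      show ?thesis
      proof (cases "ord w = 1")
        case False
        have "ord (SG * w^2) = 2 * ord w" using ord_mult[of SG "w^2"] ord_sq[OF w w0] oSG SG0 w0 SG w by simp
        hence "ord (SG * w^2) \<noteq> ord (-(4*T))" using o4T False by simp
        hence "SG * w^2 + (-(4*T)) \<noteq> 0 \<and> ord (SG * w^2 + (-(4*T))) = min (ord (SG * w^2)) (ord (-(4*T)))"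
          using SG0 w0 T0 SG w KT by (intro ord_add_ne) auto
        thus ?thesis using o4T by (simp add: min_le_iff_disj)
      next
        case True
        define v where "v = w / 2"
        have Kv: "v \<in> Kf D" unfolding v_def using w by simp
        have wv: "w = 2 * v" unfolding v_def by simp
        have v0: "v \<noteq> 0" using w0 wv by simp
        have ov: "ord v = 0" using True ord_mult[of 2 v] o2 Kv v0 wv by simp
        define E where "E = - SG * T - 1"
        have KE: "E \<in> Kf D" unfolding E_def using SG KT by simp
        have Eeq: "E = - (SG * a + 1) - SG * (4*a*s' + 8 * s'^2)" unfolding E_def T_def by (simp add: algebra_simps)
        have "vge (SG * (4*a*s' + 8 * s'^2)) (0 + 2)" using vge_ord[of SG] oSG v4a v8 SG Ka Ks
          by (intro vge_mult vge_add) auto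
        moreover have "vge (-(SG * a + 1)) 2" using a SG Ka vge_uminus[of "SG * a + 1" 2] unfolding a_def by simp
        ultimately have vE: "vge E 2" unfolding Eeq using SG Ka Ks by (intro vge_diff) auto
        have L: "v^2 + 1 + E \<noteq> 0 \<and> ord (v^2 + 1 + E) \<le> 1" by (rule Lm1[OF l2 Kv KE vE])
        have Qeq: "SG * w^2 - 4*T = 4 * SG * (v^2 + 1 + E)"
          unfolding wv E_def using SG(2) by (simp add: algebra_simps power2_eq_square)
        have KL: "v^2 + 1 + E \<in> Kf D" using Kv KE by simp
        have "ord (4 * SG * (v^2 + 1 + E)) = ord (4::complex) + ord SG + ord (v^2 + 1 + E)"
          using ord_mult[of "4*SG" "v^2 + 1 + E"] ord_mult[of 4 SG] SG SG0 KL L by simp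
        thus ?thesis unfolding Qeq using L SG0 o4 oSG by simp
      qed
    qed
    have R2: "2*SG*w^2 - 4*(z^4 - 2*C*z^2 + 1) = 2 * (SG * w^2 - 4*T)"
      unfolding X_def[symmetric] XT by (simp add: algebra_simps)
    show ?thesis unfolding R2 using fin KQ Q by blast
  qed
qed

end

lemma lift_seq:
  fixes Q :: "nat \<Rightarrow> int \<Rightarrow> bool" and b :: int
  assumes base: "Q 0 y0" and step: "\<And>n y. Q n y \<Longrightarrow> \<exists>y'. Q (Suc n) y' \<and> b^n dvd y' - y"
  shows "\<exists>f. (\<forall>n. Q n (f n)) \<and> (\<forall>m n. n \<le> m \<longrightarrow> b^n dvd f m - f n)"
proof -
  define f where "f = rec_nat y0 (\<lambda>n y. SOME y'. Q (Suc n) y' \<and> b^n dvd y' - y)"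
  have f0: "f 0 = y0" unfolding f_def by simp
  have fS: "f (Suc n) = (SOME y'. Q (Suc n) y' \<and> b^n dvd y' - f n)" for n unfolding f_def by simp
  have Qf: "Q n (f n) \<and> b^n dvd f (Suc n) - f n" for n
  proof (induction n)
    case 0
    have "Q (Suc 0) (f (Suc 0)) \<and> b^0 dvd f (Suc 0) - f 0"
      unfolding fS[of 0] by (rule someI_ex) (use step[OF base[folded f0]] in simp)
    thus ?case using base f0 by simp
  next
    case (Suc n)
    have q: "Q (Suc n) (f (Suc n))" unfolding fS by (rule conjunct1[OF someI_ex]) (use step Suc in blast)
    have "Q (Suc (Suc n)) (f (Suc (Suc n))) \<and> b^(Suc n) dvd f (Suc (Suc n)) - f (Suc n)"
      unfolding fS[of "Suc n"] by (rule someI_ex) (use step[OF q] in blast)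
    thus ?case using q by simp
  qed
  have cons: "b^n dvd f (n + k) - f n" for n k
  proof (induction k)
    case (Suc k)
    have "b^n dvd b^(n+k)" by (simp add: le_imp_power_dvd)
    hence "b^n dvd f (Suc (n+k)) - f (n+k)" using Qf[of "n+k"] dvd_trans by blast
    hence "b^n dvd (f (Suc (n+k)) - f (n+k)) + (f (n+k) - f n)" using Suc by (rule dvd_add)
    thus ?case by simp
  qed simp
  show ?thesis
  proof (intro exI conjI allI impI)
    show "Q n (f n)" for n using Qf by blast
    fix m n :: nat assume "n \<le> m"
    then obtain k where "m = n + k" using le_Suc_ex by blast
    thus "b^n dvd f m - f n" using cons by simp
  qed
qed

lemma hensel_odd:
  assumes l: "prime l" "odd l" and c: "\<not> int l dvd c" and y0: "int l dvd y0^2 - c"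
  shows "\<exists>f. (\<forall>n. int l^(n+1) dvd (f n)^2 - c) \<and> (\<forall>m n. n \<le> m \<longrightarrow> int l^n dvd f m - f n)"
proof (rule lift_seq[where Q = "\<lambda>n y. int l^(n+1) dvd y^2 - c"])
  show "int l^(0+1) dvd y0^2 - c" using y0 by simp
next
  fix n y assume Q: "int l^(n+1) dvd y^2 - c"
  have pl: "prime (int l)" using l by simp
  have "int l dvd y^2 - c" using Q by (metis dvd_power dvd_trans add_gr_0 zero_less_one)
  have ny: "\<not> int l dvd y"
  proof
    assume "int l dvd y" hence "int l dvd y^2" by (simp add: power2_eq_square)
    with \<open>int l dvd y^2 - c\<close> have "int l dvd c" by (metis dvd_diff_right_iff)
    thus False using c by simp
  qed
  have n2y: "\<not> int l dvd 2*y"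
  proof
    assume "int l dvd 2*y"
    hence "int l dvd 2 \<or> int l dvd y" using pl prime_dvd_mult_iff by blast
    moreover have "\<not> int l dvd 2"
    proof
      assume "int l dvd 2" hence "l dvd 2" by presburger
      hence "l \<le> 2" by (simp add: dvd_imp_le)
      moreover have "l \<ge> 2" using l prime_ge_2_nat by blast
      ultimately show False using l by simp
    qed
    ultimately show False using ny by blast
  qed
  have "coprime (int l) (2*y)" using pl n2y by (rule prime_imp_coprime)
  hence "coprime (2*y) (int l)" by (simp add: coprime_commute)
  then obtain u where u: "[2*y*u = 1] (mod int l)" using cong_solve_coprime_int by blast
  hence lu: "int l dvd 1 - 2*y*u" using cong_iff_dvd_diff cong_sym by (metis cong_dvd_iff cong_iff_dvd_diff dvd_minus_iff minus_diff_eq)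
  obtain k where k: "y^2 - c = int l^(n+1) * k" using Q by blast
  define L where "L = int l^(n+1)"
  define t where "t = - k * u"
  have eq: "(y + t*L)^2 - c = L*int l * (k * ((1 - 2*y*u) div int l)) + (t*L)^2"
  proof -
    have "(y + t*L)^2 - c = (y^2 - c) + 2*y*t*L + (t*L)^2" by (simp add: power2_eq_square algebra_simps)
    also have "\<dots> = L*k*(1 - 2*y*u) + (t*L)^2" unfolding k L_def t_def by (simp add: algebra_simps)
    also have "1 - 2*y*u = int l * ((1 - 2*y*u) div int l)" using lu by simp
    finally show ?thesis by (simp add: algebra_simps)
  qed
  have d1: "int l^(Suc n + 1) dvd L*int l * (k * ((1 - 2*y*u) div int l))" unfolding L_def by simp
  have "int l^(Suc n + 1) dvd L * L" unfolding L_def power_add[symmetric] by (rule le_imp_power_dvd) simp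
  hence d2: "int l^(Suc n + 1) dvd (t*L)^2"
    by (metis dvd_mult2 power2_eq_square mult.commute mult.left_commute power_mult_distrib)
  show "\<exists>y'. int l^(Suc n + 1) dvd y'^2 - c \<and> int l^n dvd y' - y"
  proof (intro exI conjI)
    show "int l^(Suc n + 1) dvd (y + t*L)^2 - c" unfolding eq using d1 d2 by simp
    show "int l^n dvd (y + t*L) - y" unfolding L_def by simp
  qed
qed

lemma hensel_two:
  assumes c: "c mod 8 = 1"
  shows "\<exists>f. (\<forall>n. (2::int)^(n+3) dvd (f n)^2 - c) \<and> (\<forall>m n. n \<le> m \<longrightarrow> (2::int)^n dvd f m - f n)"
proof -
  have "\<exists>f. (\<forall>n. (2::int)^(n+3) dvd (f n)^2 - c \<and> odd (f n)) \<and> (\<forall>m n. n \<le> m \<longrightarrow> (2::int)^n dvd f m - f n)"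
  proof (rule lift_seq[where Q = "\<lambda>n y. (2::int)^(n+3) dvd y^2 - c \<and> odd y"])
    show "(2::int)^(0+3) dvd 1^2 - c \<and> odd (1::int)" using c by (simp add: mod_eq_dvd_iff[symmetric])
  next
    fix n and y :: int assume Q: "2^(n+3) dvd y^2 - c \<and> odd y"
    obtain k where k: "y^2 - c = 2^(n+3) * k" using Q by blast
    show "\<exists>y'. ((2::int)^(Suc n + 3) dvd y'^2 - c \<and> odd y') \<and> 2^n dvd y' - y"
    proof (cases "even k")
      case True
      then obtain j where "k = 2*j" by blast
      hence "y^2 - c = 2^(Suc n + 3) * j" using k by (simp add: power_add)
      thus ?thesis using Q by (intro exI[of _ y]) auto
    next
      case False
      define y' where "y' = y + 2^(n+2)"
      have eq: "y'^2 - c = 2^(n+3) * (k + y) + 2^(n+4) * 2^n"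
        unfolding y'_def using k by (simp add: power2_eq_square algebra_simps power_add)
      have "even (k + y)" using False Q by simp
      then obtain j where "k + y = 2*j" by blast
      hence "y'^2 - c = 2^(Suc n + 3) * (j + 2^n)" unfolding eq by (simp add: algebra_simps power_add)
      moreover have "odd y'" unfolding y'_def using Q by simp
      moreover have "(2::int)^n dvd y' - y" unfolding y'_def by (simp add: le_imp_power_dvd)
      ultimately show ?thesis by (intro exI[of _ y']) auto
    qed
  qed
  thus ?thesis by blast
qed

lemma inert_D_nonres:
  assumes inert: "inert D l" and m: "4 * m = 1 - D" and lo: "odd l"
  shows "\<not> int l dvd t^2 - D"
proof
  assume h: "int l dvd t^2 - D"
  have l: "prime l" using inert by (simp add: inert_def)
  have pl: "prime (int l)" using l by simp
  define x where "x = (1 + t) * ((int l + 1) div 2)"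
  have h2: "2 * ((int l + 1) div 2) = int l + 1" using lo by presburger
  have x2: "2 * x = (1 + t) * (int l + 1)" unfolding x_def by (metis h2 mult.left_commute)
  have "4 * (x^2 - x + m) = (2*x - 1)^2 - D" using m by (simp add: power2_eq_square algebra_simps)
  also have "(2*x - 1) = t + int l * (1 + t)" unfolding x2 by (simp add: algebra_simps)
  also have "(t + int l * (1 + t))^2 - D = (t^2 - D) + int l * ((1+t) * (2*t + int l * (1 + t)))"
    by (simp add: power2_eq_square algebra_simps)
  finally have "int l dvd 4 * (x^2 - x + m)" using h by simp
  moreover have "\<not> int l dvd 4"
  proof
    assume "int l dvd 4" hence "int l dvd 2 * 2" by simp
    hence "int l dvd 2" using pl prime_dvd_mult_iff by blast
    hence "l dvd 2" by presburger
    hence "l = 1 \<or> l = 2" using dvd_imp_le[of l 2] by (cases l) (auto simp: le_Suc_eq)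
    thus False using l lo by auto
  qed
  ultimately have "int l dvd x^2 - x + m" using pl prime_dvd_mult_iff by blast
  moreover have "(1 - D) div 4 = m" by (simp add: m[symmetric])
  ultimately have "[x^2 - x + (1 - D) div 4 = 0] (mod int l)" by (simp add: cong_0_iff)
  thus False using inert unfolding inert_def by blast
qed

lemma QR_choice:
  assumes l: "prime l" "odd l" and c: "\<not> int l dvd c" and D: "\<And>t. \<not> int l dvd t^2 - D"
  shows "(\<exists>y. int l dvd y^2 - c) \<or> (\<exists>y. int l dvd y^2 - c * D)"
proof (rule ccontr)
  assume nn: "\<not> ((\<exists>y. int l dvd y^2 - c) \<or> (\<exists>y. int l dvd y^2 - c * D))"
  have l2: "2 < l" using l prime_ge_2_nat[of l] by (cases "l = 2") auto
  have pl: "prime (int l)" using l by simp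
  have D0: "\<not> int l dvd D" using D[of 0] by simp
  have qr: "QuadRes (int l) a \<longleftrightarrow> (\<exists>y. int l dvd y^2 - a)" for a
    unfolding QuadRes_def by (simp add: cong_iff_dvd_diff)
  have z: "\<not> [a = 0] (mod int l)" if "\<not> int l dvd a" for a using that by (simp add: cong_0_iff)
  have Lc: "Legendre c (int l) = -1" using nn z[OF c] qr[of c] unfolding Legendre_def by auto
  have LD: "Legendre D (int l) = -1" using D z[OF D0] qr[of D] unfolding Legendre_def by auto
  have cD: "\<not> int l dvd c * D" using c D0 pl prime_dvd_mult_iff by blast
  have LcD: "Legendre (c*D) (int l) = -1" using nn z[OF cD] qr[of "c*D"] unfolding Legendre_def by auto
  have e1: "[-1 = c ^ ((l - 1) div 2)] (mod int l)" using euler_criterion[OF l(1) l2, of c] Lc by simp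
  have e2: "[-1 = D ^ ((l - 1) div 2)] (mod int l)" using euler_criterion[OF l(1) l2, of D] LD by simp
  have e3: "[-1 = (c*D) ^ ((l - 1) div 2)] (mod int l)" using euler_criterion[OF l(1) l2, of "c*D"] LcD by simp
  have "[(-1) * (-1) = c ^ ((l - 1) div 2) * D ^ ((l - 1) div 2)] (mod int l)"
    using e1 e2 by (rule cong_mult)
  hence "[1 = (c*D) ^ ((l - 1) div 2)] (mod int l)" by (simp add: power_mult_distrib)
  hence "[-1 = 1] (mod int l)" using e3 cong_sym cong_trans by blast
  hence "int l dvd 2" by (simp add: cong_iff_dvd_diff)
  hence "l dvd 2" by presburger
  hence "l \<le> 2" by (simp add: dvd_imp_le)
  thus False using l2 by simp
qed

context Kval begin

definition sqD :: complex where "sqD = 2 * omega D - 1"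

lemma sqD_sq: "sqD^2 = of_int D"
proof -
  have "sqD^2 = 4 * omega D ^ 2 - 4 * omega D + 1" unfolding sqD_def by (simp add: power2_eq_square algebra_simps)
  also have "\<dots> = 1 - 4 * of_int m" unfolding omega_sq by (simp add: algebra_simps)
  also have "\<dots> = of_int D"
  proof -
    have h: "4 * (of_int m :: complex) = 1 - of_int D" using arg_cong[OF m4, of "of_int :: int \<Rightarrow> complex"] by simp
    thus ?thesis by simp
  qed
  finally show ?thesis .
qed

lemma sqD_K [simp]: "sqD \<in> Kf D" unfolding sqD_def by simp

lemma dvd_min_diff: fixes f :: "nat \<Rightarrow> int" and m n :: nat assumes "\<forall>m n. n \<le> m \<longrightarrow> (b::int)^n dvd f m - f n"
  shows "b^(min m n) dvd f m - f n"
proof (cases "n \<le> m")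
  case True thus ?thesis using assms by (simp add: min_def)
next
  case False
  hence "b^m dvd f n - f m" using assms by simp
  hence "b^m dvd f m - f n" by (metis dvd_minus_iff minus_diff_eq)
  thus ?thesis using False by (simp add: min_def)
qed

lemma sqrt_seq:
  assumes c: "(odd l \<and> \<not> int l dvd c) \<or> (l = 2 \<and> c mod 4 = 1 \<and> D mod 8 = 5)"
  shows "\<exists>x. (\<forall>n. x n \<in> Kf D) \<and> (\<forall>n. vge (x n) 0) \<and> (\<forall>m n. vge (x m - x n) (int (min m n)))
             \<and> (\<forall>n. vge ((x n)^2 - of_int c) (int n))"
proof -
  have D0: "\<not> int l dvd D"
  proof (cases "odd l")
    case True thus ?thesis using inert_D_nonres[OF inert m4 True, of 0] by simp
  next
    case False hence h: "l = 2 \<and> c mod 4 = 1 \<and> D mod 8 = 5" using c by blast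
    hence "odd D" by presburger
    thus ?thesis using h by simp
  qed
  obtain c' f where cc: "c' = c \<or> c' = c * D"
    and f1: "\<forall>n. int l^n dvd (f n)^2 - c'" and f2: "\<forall>m n. n \<le> m \<longrightarrow> int l^n dvd f m - f n"
  proof (cases "odd l")
    case True
    hence cl: "\<not> int l dvd c" using c by auto
    have "(\<exists>y. int l dvd y^2 - c) \<or> (\<exists>y. int l dvd y^2 - c * D)"
      by (rule QR_choice[OF l_prime True cl]) (use inert_D_nonres[OF inert m4 True] in blast)
    then obtain c' y where cc: "c' = c \<or> c' = c * D" and y: "int l dvd y^2 - c'" by blast
    have "\<not> int l dvd c'" using cc cl D0 l_prime prime_dvd_mult_iff[of "int l" c D] by auto
    from hensel_odd[OF l_prime True this y] obtain f where
      h1: "\<forall>n. int l^(n+1) dvd (f n)^2 - c'" and h2: "\<forall>m n. n \<le> m \<longrightarrow> int l^n dvd f m - f n" by blast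
    have "int l^n dvd (f n)^2 - c'" for n
      using dvd_trans[OF le_imp_power_dvd[of n "n+1" "int l"] h1[rule_format, of n]] by simp
    thus ?thesis using that[OF cc _ h2] by blast
  next
    case False
    hence h: "l = 2 \<and> c mod 4 = 1 \<and> D mod 8 = 5" using c by blast
    hence l2: "l = 2" and c4: "c mod 4 = 1" and D8: "D mod 8 = 5" by simp_all
    define c' where "c' = (if c mod 8 = 1 then c else c * D)"
    have cc: "c' = c \<or> c' = c * D" unfolding c'_def by simp
    have c85: "c mod 8 = 1 \<or> c mod 8 = 5" using c4 by presburger
    have cD: "(c*D) mod 8 = ((c mod 8) * (D mod 8)) mod 8" by (simp add: mod_mult_eq)
    have c'8: "c' mod 8 = 1"
    proof (cases "c mod 8 = 1")
      case True thus ?thesis unfolding c'_def by simp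
    next
      case False
      hence "c mod 8 = 5" using c85 by simp
      hence "(c*D) mod 8 = 1" using cD D8 by simp
      thus ?thesis unfolding c'_def using False by simp
    qed
    from hensel_two[OF c'8] obtain f where
      h1: "\<forall>n. (2::int)^(n+3) dvd (f n)^2 - c'" and h2: "\<forall>m n. n \<le> m \<longrightarrow> (2::int)^n dvd f m - f n" by blast
    have "(2::int)^n dvd (f n)^2 - c'" for n
      using dvd_trans[OF le_imp_power_dvd[of n "n+3" "2::int"] h1[rule_format, of n]] by simp
    hence f1': "\<forall>n. int l^n dvd (f n)^2 - c'" using l2 by simp
    have h2': "\<forall>m n. n \<le> m \<longrightarrow> int l^n dvd f m - f n" using h2 l2 by simp
    show ?thesis by (rule that[OF cc f1' h2'])
  qed
  have fm: "int l^(min m n) dvd f m - f n" for m n by (rule dvd_min_diff[OF f2])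
  show ?thesis
  proof (cases "c' = c")
    case True
    show ?thesis
    proof (intro exI[of _ "\<lambda>n. of_int (f n)"] conjI allI)
      fix n m
      show "of_int (f n) \<in> Kf D" by simp
      show "vge (of_int (f n)) 0" by (rule vge_int)
      have e1: "of_int (f m - f n) = of_int (f m) - (of_int (f n)::complex)" by (rule of_int_diff)
      show "vge (of_int (f m) - of_int (f n)) (int (min m n))" using vge_ofint[OF fm[of m n]] unfolding e1 .
      have e2: "of_int ((f n)^2 - c') = (of_int (f n))^2 - (of_int c::complex)" unfolding True by simp
      show "vge ((of_int (f n))^2 - of_int c) (int n)" using vge_ofint[OF f1[rule_format, of n]] unfolding e2 .
    qed
  next
    case False
    hence c': "c' = c * D" using cc by simp
    define g where "g = sqD / of_int D"
    have Kg: "g \<in> Kf D" unfolding g_def by simp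
    have Dz: "D \<noteq> 0" using Dneg by simp
    have oD: "ord (of_int D) = 0" using ord_int_unit[OF D0] by simp
    have sq0: "sqD \<noteq> 0" using sqD_sq Dz by auto
    have osq: "ord sqD = 0" using ord_sq[OF sqD_K sq0] sqD_sq oD by simp
    have og: "ord g = 0" unfolding g_def using ord_mult[of sqD "inverse (of_int D)"] osq oD
      ord_inverse[of "of_int D"] Dz sq0 by (simp add: divide_inverse)
    have vg: "vge g 0" using og vge_ord[of g] by simp
    have g2: "g^2 = inverse (of_int D)" unfolding g_def using sqD_sq Dz by (simp add: power2_eq_square field_simps)
    have viD: "vge (inverse (of_int D)) 0" using ord_inverse[of "of_int D"] oD Dz unfolding vge_def by simp
    show ?thesis
    proof (intro exI[of _ "\<lambda>n. of_int (f n) * g"] conjI allI)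
      fix n m
      show "of_int (f n) * g \<in> Kf D" using Kg by simp
      show "vge (of_int (f n) * g) 0" using vge_mult[OF _ Kg vge_int vg] by simp
      have "vge (of_int (f m - f n) * g) (int (min m n) + 0)"
        by (rule vge_mult[OF _ Kg vge_ofint[OF fm[of m n]] vg]) simp
      thus "vge (of_int (f m) * g - of_int (f n) * g) (int (min m n))" by (simp add: algebra_simps)
      have vv: "vge (of_int ((f n)^2 - c') * inverse (of_int D)) (int n + 0)"
        by (rule vge_mult[OF _ _ vge_ofint[OF f1[rule_format, of n]] viD]) simp_all
      have DiD: "of_int D * inverse (of_int D) = (1::complex)" using Dz by simp
      have "of_int ((f n)^2 - c') * inverse (of_int D)
          = (of_int (f n)^2 - of_int c * of_int D) * (inverse (of_int D) :: complex)" unfolding c' by simp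
      also have "\<dots> = of_int (f n)^2 * inverse (of_int D) - of_int c * (of_int D * inverse (of_int D))"
        by (simp only: left_diff_distrib mult.assoc)
      finally have "of_int ((f n)^2 - c') * inverse (of_int D)
          = of_int (f n)^2 * inverse (of_int D) - of_int c * (of_int D * (inverse (of_int D) :: complex))" .
      moreover have "(of_int (f n) * g)^2 = of_int (f n)^2 * inverse (of_int D)"
        unfolding power_mult_distrib g2 ..
      ultimately have eq: "of_int ((f n)^2 - c') * inverse (of_int D) = (of_int (f n) * g)^2 - of_int c"
        by (simp only: DiD mult_1_right)
      show "vge ((of_int (f n) * g)^2 - of_int c) (int n)" using vv unfolding eq by simp
    qed
  qed
qed

end

context Kval begin

lemma seq_sol:
  assumes xK: "\<And>n. x n \<in> Kf D" and xv: "\<And>n. vge (x n) 0"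
    and xc: "\<And>m n. vge (x m - x n) (int (min m n))" and xs: "\<And>n. vge ((x n)^2 - c) (int n)"
    and cKf: "c \<in> Kf D" and K: "za \<in> Kf D" "zb \<in> Kf D" "wa \<in> Kf D" "wb \<in> Kf D" "vge za 0" "vge wa 0"
    and H: "\<And>u. u \<in> Kf D \<Longrightarrow> vge u 0 \<Longrightarrow>
              H u \<in> Kf D \<and> vge (H u) 0 \<and> d * (wa*u + wb)^2 - g d (za*u + zb) = (u^2 - c) * H u"
  shows "loc_sol D l g d"
proof (rule loc_sol_intro[where z = "\<lambda>n. za * x n + zb" and w = "\<lambda>n. wa * x n + wb"])
  fix n m
  show "za * x n + zb \<in> Kf D \<and> wa * x n + wb \<in> Kf D" using K xK by simp
  have "vge (za * (x m - x n)) (0 + int (min m n))" by (rule vge_mult[OF _ _ K(5) xc]) (use K xK in simp_all)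
  thus "vge (za * x m + zb - (za * x n + zb)) (int (min m n))" by (simp add: algebra_simps)
  have "vge (wa * (x m - x n)) (0 + int (min m n))" by (rule vge_mult[OF _ _ K(6) xc]) (use K xK in simp_all)
  thus "vge (wa * x m + wb - (wa * x n + wb)) (int (min m n))" by (simp add: algebra_simps)
  have h: "H (x n) \<in> Kf D \<and> vge (H (x n)) 0 \<and> d * (wa * x n + wb)^2 - g d (za * x n + zb) = ((x n)^2 - c) * H (x n)"
    using H[OF xK xv] .
  have cK: "(x n)^2 - c \<in> Kf D" using xK cKf by simp
  have "vge (((x n)^2 - c) * H (x n)) (int n + 0)" by (rule vge_mult[OF cK _ xs]) (use h in simp_all)
  thus "vge (d * (wa * x n + wb)^2 - g d (za * x n + zb)) (int n)" using h by simp
qed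

end

locale Setup =
  fixes p q :: nat and D eps :: int
  assumes pp: "prime p" and pq: "prime q" and po: "odd p" and qo: "odd q" and qp: "q = p + 2"
    and Dset: "D \<in> {-11, -19, -43, -67, -163}"
    and ip: "inert D p" and iq: "inert D q" and eps: "eps \<in> {1, -1}"
begin

lemma Dneg: "D < 0" using Dset by auto
lemma D4: "D mod 4 = 1" using Dset by auto
lemma D8: "D mod 8 = 5" using Dset by auto

lemma inert2: "inert D 2"
  unfolding inert_def
proof (intro conjI notI)
  show "prime (2::nat)" by simp
  assume "\<exists>x::int. [x^2 - x + (1 - D) div 4 = 0] (mod int 2)"
  then obtain x :: int where x: "[x^2 - x + (1 - D) div 4 = 0] (mod 2)" by auto
  have "odd ((1 - D) div 4)" using Dset by auto
  moreover have "even (x^2 - x)" by (simp add: power2_eq_square)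
  ultimately have "odd (x^2 - x + (1 - D) div 4)" by simp
  thus False using x by (simp add: cong_0_iff)
qed

sublocale K2: Kval D 2 by unfold_locales (use Dneg D4 inert2 in auto)
sublocale Kp: Kval D p by unfold_locales (use Dneg D4 ip in auto)
sublocale Kq: Kval D q by unfold_locales (use Dneg D4 iq in auto)

lemma p3: "p \<ge> 3" using pp po prime_ge_2_nat[of p] by (cases "p = 2") auto

lemma ndvd2: "\<not> int p dvd 2" "\<not> int p dvd 4" "\<not> int q dvd 2" "\<not> int q dvd 4"
proof -
  have a: "\<not> int x dvd 2" if "x \<ge> 3" for x :: nat
    using that by (auto dest!: zdvd_imp_le)
  have b: "\<not> int x dvd 4" if "x \<ge> 3" "prime x" for x :: nat
  proof
    assume "int x dvd 4" hence "int x dvd 2 * 2" by simp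
    hence "int x dvd 2" using that prime_dvd_mult_iff[of "int x" 2 2] by simp
    thus False using a that by blast
  qed
  have q3: "q \<ge> 3" using qp p3 by simp
  show "\<not> int p dvd 2" "\<not> int p dvd 4" "\<not> int q dvd 2" "\<not> int q dvd 4"
    using a[OF p3] b[OF p3 pp] a[OF q3] b[OF q3 pq] by auto
qed

lemma eps2: "eps^2 = 1" "(of_int eps :: complex)^2 = 1" using eps by auto

lemma gphi_eq: "gphi eps p q d z = d^2 + of_int (-2*eps*(int p + int q)) * d * z^2 + 4 * z^4"
  unfolding gphi_def by (simp add: algebra_simps)

lemma KS2_mem: "d \<in> KS2 D p q \<Longrightarrow> d \<in> Kf D \<and> d \<noteq> 0" unfolding KS2_def by auto

lemma part1: "\<forall>d \<in> KS2 D p q. (odd (ordv D p d) \<or> odd (ordv D q d) \<or> (\<exists>t \<in> Kf D. d = - (t^2)))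
            \<longrightarrow> d \<notin> Sel_phi D eps p q"
proof (intro ballI impI notI)
  fix d assume dS: "d \<in> KS2 D p q" and h: "odd (ordv D p d) \<or> odd (ordv D q d) \<or> (\<exists>t \<in> Kf D. d = - (t^2))"
    and sel: "d \<in> Sel_phi D eps p q"
  have d: "d \<in> Kf D" "d \<noteq> 0" using KS2_mem[OF dS] by auto
  have ls: "loc_sol D l (gphi eps p q) d" if "l \<in> {2, p, q}" for l using sel that unfolding Sel_phi_def by auto
  define c :: complex where "c = of_int (-2*eps*(int p + int q))"
  have cK: "c \<in> Kf D" unfolding c_def by simp
  have g: "gphi eps p q d z = d^2 + c * d * z^2 + 4 * z^4" for z unfolding c_def gphi_eq ..
  from h show False
  proof (elim disjE)
    assume o: "odd (ordv D p d)"
    have "\<not> loc_sol D p (gphi eps p q) d"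
    proof (rule Kp.not_loc_sol[where N = "2 * ordv D p d"])
      fix z w assume z: "z \<in> Kf D" and w: "w \<in> Kf D"
      have o4: "ordv D p (4::complex) = 0" using Kp.ord_int_unit[of 4] ndvd2 by simp
      have vc: "Kp.vge c 0" unfolding c_def by (rule Kp.vge_int)
      have L: "d * w^2 - (d^2 + c*d*z^2 + 4*z^4) \<noteq> 0 \<and> ordv D p (d * w^2 - (d^2 + c*d*z^2 + 4*z^4)) \<le> 2 * ordv D p d"
        by (rule Kp.L1[OF d o cK vc _ _ o4 z w]) simp_all
      show "d * w^2 - gphi eps p q d z \<noteq> 0 \<and> ordv D p (d * w^2 - gphi eps p q d z) \<le> 2 * ordv D p d"
        unfolding g by (rule L)
    qed
    thus False using ls by simp
  next
    assume o: "odd (ordv D q d)"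
    have "\<not> loc_sol D q (gphi eps p q) d"
    proof (rule Kq.not_loc_sol[where N = "2 * ordv D q d"])
      fix z w assume z: "z \<in> Kf D" and w: "w \<in> Kf D"
      have o4: "ordv D q (4::complex) = 0" using Kq.ord_int_unit[of 4] ndvd2 by simp
      have vc: "Kq.vge c 0" unfolding c_def by (rule Kq.vge_int)
      have L: "d * w^2 - (d^2 + c*d*z^2 + 4*z^4) \<noteq> 0 \<and> ordv D q (d * w^2 - (d^2 + c*d*z^2 + 4*z^4)) \<le> 2 * ordv D q d"
        by (rule Kq.L1[OF d o cK vc _ _ o4 z w]) simp_all
      show "d * w^2 - gphi eps p q d z \<noteq> 0 \<and> ordv D q (d * w^2 - gphi eps p q d z) \<le> 2 * ordv D q d"
        unfolding g by (rule L)
    qed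
    thus False using ls by simp
  next
    assume "\<exists>t \<in> Kf D. d = - (t^2)"
    then obtain t where t: "t \<in> Kf D" "d = - (t^2)" by blast
    have t0: "t \<noteq> 0" using t d by auto
    have k: "-2*eps*(int p + int q) = 4 * (- eps * (int p + 1))" using qp by (simp add: algebra_simps)
    have "\<not> loc_sol D 2 (gphi eps p q) d"
    proof (rule K2.not_loc_sol[where N = "4 * ordv D 2 t + 1"])
      fix z w assume z: "z \<in> Kf D" and w: "w \<in> Kf D"
      have L: "(-(t^2)) * w^2 - ((-(t^2))^2 + c * (-(t^2)) * z^2 + 4 * z^4) \<noteq> 0 \<and>
         ordv D 2 ((-(t^2)) * w^2 - ((-(t^2))^2 + c * (-(t^2)) * z^2 + 4 * z^4)) \<le> 4 * ordv D 2 t + 1"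
        unfolding c_def by (rule K2.L1c[OF refl t(1) t0 k z w])
      show "d * w^2 - gphi eps p q d z \<noteq> 0 \<and> ordv D 2 (d * w^2 - gphi eps p q d z) \<le> 4 * ordv D 2 t + 1"
        unfolding g unfolding t(2) by (rule L)
    qed
    thus False using ls by simp
  qed
qed

end

context Kval begin

lemma sol_sqrt:
  assumes c: "(odd l \<and> \<not> int l dvd c) \<or> (l = 2 \<and> c mod 4 = 1 \<and> D mod 8 = 5)"
    and K: "za \<in> Kf D" "zb \<in> Kf D" "wa \<in> Kf D" "wb \<in> Kf D" "vge za 0" "vge wa 0"
    and H: "\<And>u. u \<in> Kf D \<Longrightarrow> vge u 0 \<Longrightarrow>
              H u \<in> Kf D \<and> vge (H u) 0 \<and> d * (wa*u + wb)^2 - g d (za*u + zb) = (u^2 - of_int c) * H u"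
  shows "loc_sol D l g d"
proof -
  obtain x where x: "\<forall>n. x n \<in> Kf D" "\<forall>n. vge (x n) 0" "\<forall>m n. vge (x m - x n) (int (min m n))"
    "\<forall>n. vge ((x n)^2 - of_int c) (int n)" using sqrt_seq[OF c] by blast
  have cK: "(of_int c :: complex) \<in> Kf D" by simp
  show ?thesis by (rule seq_sol[where x = x and c = "of_int c" and za=za and zb=zb and wa=wa and wb=wb and H=H and g=g and d=d, OF x(1)[rule_format] x(2)[rule_format] x(3)[rule_format] x(4)[rule_format] cK K H])
qed

lemma sol_exact:
  assumes "zb \<in> Kf D" "wb \<in> Kf D" "d * wb^2 - g d zb = 0"
  shows "loc_sol D l g d"
proof -
  have x1: "(\<lambda>n. 0::complex) n \<in> Kf D" "vge ((\<lambda>n. 0::complex) n) 0"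
     "vge ((\<lambda>n. 0::complex) m - (\<lambda>n. 0::complex) n) (int (min m n))" "vge (((\<lambda>n. 0::complex) n)^2 - 0) (int n)" for n m
    by simp_all
  show ?thesis
    by (rule seq_sol[where x = "\<lambda>n. 0" and c = 0 and za = 0 and wa = 0 and zb = zb and wb = wb and H = "\<lambda>u. 0"
          and g = g and d = d, OF x1(1) x1(2) x1(3) x1(4)]) (use assms in auto)
qed

end

context Setup begin

lemma inf_sol0: assumes "g d 0 = d^2" shows "inf_sol g d"
  unfolding inf_sol_def
proof (intro exI)
  have "d * (csqrt d)^2 = d * d" by (simp only: power2_csqrt)
  thus "d * (csqrt d)^2 = g d 0" using assms by (simp add: power2_eq_square)
qed

lemma gphi0: "gphi eps p q d 0 = d^2" unfolding gphi_def by simp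
lemma gphihat0: "gphihat eps p q d 0 = d^2" unfolding gphihat_def by simp

lemma KS2_I: assumes d: "d = (-1)^e * 2^a * (of_nat p)^b * (of_nat q)^c" shows "d \<in> KS2 D p q"
  unfolding KS2_def
proof (intro CollectI conjI)
  show "d \<in> Kf D" unfolding d by simp
  have "p > 0" "q > 0" using pp pq prime_gt_0_nat by auto
  thus "d \<noteq> 0" unfolding d by simp
  show "\<exists>e a b c. \<exists>t\<in>Kf D. t \<noteq> 0 \<and> d = (-1)^e * 2^a * (of_nat p)^b * (of_nat q)^c * t^2"
    by (rule exI[of _ e], rule exI[of _ a], rule exI[of _ b], rule exI[of _ c], rule bexI[of _ 1]) (simp_all add: d)
qed

lemma odd_lp: "odd p" "odd q" using po qo .

lemma Sel_phi_I:
  assumes "d \<in> KS2 D p q" "loc_sol D 2 (gphi eps p q) d" "loc_sol D p (gphi eps p q) d" "loc_sol D q (gphi eps p q) d"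
  shows "d \<in> Sel_phi D eps p q"
  unfolding Sel_phi_def using assms inf_sol0[where g = "gphi eps p q" and d = d, OF gphi0] by auto

lemma Sel_phihat_I:
  assumes "d \<in> KS2 D p q" "loc_sol D 2 (gphihat eps p q) d" "loc_sol D p (gphihat eps p q) d" "loc_sol D q (gphihat eps p q) d"
  shows "d \<in> Sel_phihat D eps p q"
  unfolding Sel_phihat_def using assms inf_sol0[where g = "gphihat eps p q" and d = d, OF gphihat0] by auto

lemma eps_cases: "eps = 1 \<or> eps = -1" using eps by auto

lemma part2a: "(2 \<in> Sel_phi D eps p q) \<longleftrightarrow> p mod 4 = 3"
proof
  assume p3: "p mod 4 = 3"
  have KS: "2 \<in> KS2 D p q" by (rule KS2_I[of _ 0 1 0 0]) simp
  have l2: "loc_sol D 2 (gphi eps p q) 2"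
  proof (rule K2.sol_sqrt[where c = "1 - eps * (int p + 1)" and za = 0 and zb = 1 and wa = 2 and wb = 0
        and H = "\<lambda>u. 8"])
    have "(1 - eps * (int p + 1)) mod 4 = 1" using eps_cases p3 by (elim disjE; simp; presburger)
    thus "(odd 2 \<and> \<not> int 2 dvd (1 - eps * (int p + 1))) \<or> (2 = 2 \<and> (1 - eps * (int p + 1)) mod 4 = 1 \<and> D mod 8 = 5)"
      using D8 by simp
    fix u assume "u \<in> Kf D" "K2.vge u 0"
    show "8 \<in> Kf D \<and> K2.vge 8 0 \<and> 2 * (2*u + 0)^2 - gphi eps p q 2 (0*u + 1) = (u^2 - of_int (1 - eps * (int p + 1))) * 8"
      using K2.vge_int[of 8] by (simp add: gphi_def qp algebra_simps)
  qed (auto simp: K2.vge_int[of 0, simplified] K2.vge_int[of 2, simplified])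
  have lp: "loc_sol D p (gphi eps p q) 2"
  proof (rule Kp.sol_sqrt[where c = 2 and za = 0 and zb = 0 and wa = 1 and wb = 0 and H = "\<lambda>u. 2"])
    show "(odd p \<and> \<not> int p dvd 2) \<or> (p = 2 \<and> 2 mod 4 = 1 \<and> D mod 8 = 5)" using po ndvd2 by simp
    fix u assume "u \<in> Kf D" "Kp.vge u 0"
    show "2 \<in> Kf D \<and> Kp.vge 2 0 \<and> 2 * (1*u + 0)^2 - gphi eps p q 2 (0*u + 0) = (u^2 - of_int 2) * 2"
      using Kp.vge_int[of 2] by (simp add: gphi_def algebra_simps power2_eq_square)
  qed (auto simp: Kp.vge_int[of 0, simplified] Kp.vge_int[of 1, simplified])
  have lq: "loc_sol D q (gphi eps p q) 2"
  proof (rule Kq.sol_sqrt[where c = 2 and za = 0 and zb = 0 and wa = 1 and wb = 0 and H = "\<lambda>u. 2"])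
    show "(odd q \<and> \<not> int q dvd 2) \<or> (q = 2 \<and> 2 mod 4 = 1 \<and> D mod 8 = 5)" using qo ndvd2 by simp
    fix u assume "u \<in> Kf D" "Kq.vge u 0"
    show "2 \<in> Kf D \<and> Kq.vge 2 0 \<and> 2 * (1*u + 0)^2 - gphi eps p q 2 (0*u + 0) = (u^2 - of_int 2) * 2"
      using Kq.vge_int[of 2] by (simp add: gphi_def algebra_simps power2_eq_square)
  qed (auto simp: Kq.vge_int[of 0, simplified] Kq.vge_int[of 1, simplified])
  show "2 \<in> Sel_phi D eps p q" by (rule Sel_phi_I[OF KS l2 lp lq])
next
  assume sel: "2 \<in> Sel_phi D eps p q"
  show "p mod 4 = 3"
  proof (rule ccontr)
    assume "p mod 4 \<noteq> 3"
    hence p1: "p mod 4 = 1" using po by presburger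
    define C :: complex where "C = of_int (eps * (int p + 1))"
    have CK: "C \<in> Kf D" unfolding C_def by simp
    have vC: "K2.vge C 1" unfolding C_def using K2.vge_ofint[of 1 "eps * (int p + 1)"] po by simp
    have "int 2 ^ 2 dvd 2 - eps * (int p + 1)" using eps_cases p1 by (elim disjE; simp; presburger)
    hence "K2.vge (of_int (2 - eps * (int p + 1))) 2" using K2.vge_ofint by fastforce
    hence va: "K2.vge (1 * (1 - C) + 1) 2" unfolding C_def by (simp add: algebra_simps)
    have "\<not> loc_sol D 2 (gphi eps p q) 2"
    proof (rule K2.not_loc_sol[where N = 4])
      fix z w assume z: "z \<in> Kf D" and w: "w \<in> Kf D"
      have L: "2*1*w^2 - 4*(z^4 - 2*C*z^2 + 1) \<noteq> 0 \<and> ordv D 2 (2*1*w^2 - 4*(z^4 - 2*C*z^2 + 1)) \<le> 4"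
        by (rule K2.L2[OF refl _ _ CK vC va z w]) simp_all
      have eq: "2 * w^2 - gphi eps p q 2 z = 2*1*w^2 - 4*(z^4 - 2*C*z^2 + 1)"
        unfolding C_def by (simp add: gphi_def qp algebra_simps)
      show "2 * w^2 - gphi eps p q 2 z \<noteq> 0 \<and> ordv D 2 (2 * w^2 - gphi eps p q 2 z) \<le> 4"
        unfolding eq by (rule L)
    qed
    thus False using sel unfolding Sel_phi_def by auto
  qed
qed

lemma part2b: "(-2 \<in> Sel_phi D eps p q) \<longleftrightarrow> p mod 4 = 1"
proof
  assume p1: "p mod 4 = 1"
  have KS: "-2 \<in> KS2 D p q" by (rule KS2_I[of _ 1 1 0 0]) simp
  have l2: "loc_sol D 2 (gphi eps p q) (-2)"
  proof (rule K2.sol_sqrt[where c = "-1 - eps * (int p + 1)" and za = 0 and zb = 1 and wa = 2 and wb = 0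
        and H = "\<lambda>u. -8"])
    have "(-1 - eps * (int p + 1)) mod 4 = 1" using eps_cases p1 by (elim disjE; simp; presburger)
    thus "(odd 2 \<and> \<not> int 2 dvd (-1 - eps * (int p + 1))) \<or> (2 = 2 \<and> (-1 - eps * (int p + 1)) mod 4 = 1 \<and> D mod 8 = 5)"
      using D8 by simp
    fix u assume "u \<in> Kf D" "K2.vge u 0"
    show "-8 \<in> Kf D \<and> K2.vge (-8) 0 \<and> -2 * (2*u + 0)^2 - gphi eps p q (-2) (0*u + 1) = (u^2 - of_int (-1 - eps * (int p + 1))) * -8"
      using K2.vge_int[of "-8"] by (simp add: gphi_def qp algebra_simps)
  qed (auto simp: K2.vge_int[of 0, simplified] K2.vge_int[of 2, simplified])
  have lp: "loc_sol D p (gphi eps p q) (-2)"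
  proof (rule Kp.sol_sqrt[where c = "-2" and za = 0 and zb = 0 and wa = 1 and wb = 0 and H = "\<lambda>u. -2"])
    show "(odd p \<and> \<not> int p dvd -2) \<or> (p = 2 \<and> -2 mod 4 = 1 \<and> D mod 8 = 5)" using po ndvd2 by simp
    fix u assume "u \<in> Kf D" "Kp.vge u 0"
    show "-2 \<in> Kf D \<and> Kp.vge (-2) 0 \<and> -2 * (1*u + 0)^2 - gphi eps p q (-2) (0*u + 0) = (u^2 - of_int (-2)) * -2"
      using Kp.vge_int[of "-2"] by (simp add: gphi_def algebra_simps power2_eq_square)
  qed (auto simp: Kp.vge_int[of 0, simplified] Kp.vge_int[of 1, simplified])
  have lq: "loc_sol D q (gphi eps p q) (-2)"
  proof (rule Kq.sol_sqrt[where c = "-2" and za = 0 and zb = 0 and wa = 1 and wb = 0 and H = "\<lambda>u. -2"])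
    show "(odd q \<and> \<not> int q dvd -2) \<or> (q = 2 \<and> -2 mod 4 = 1 \<and> D mod 8 = 5)" using qo ndvd2 by simp
    fix u assume "u \<in> Kf D" "Kq.vge u 0"
    show "-2 \<in> Kf D \<and> Kq.vge (-2) 0 \<and> -2 * (1*u + 0)^2 - gphi eps p q (-2) (0*u + 0) = (u^2 - of_int (-2)) * -2"
      using Kq.vge_int[of "-2"] by (simp add: gphi_def algebra_simps power2_eq_square)
  qed (auto simp: Kq.vge_int[of 0, simplified] Kq.vge_int[of 1, simplified])
  show "-2 \<in> Sel_phi D eps p q" by (rule Sel_phi_I[OF KS l2 lp lq])
next
  assume sel: "-2 \<in> Sel_phi D eps p q"
  show "p mod 4 = 1"
  proof (rule ccontr)
    assume "p mod 4 \<noteq> 1"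
    hence p3: "p mod 4 = 3" using po by presburger
    define C :: complex where "C = of_int (- eps * (int p + 1))"
    have CK: "C \<in> Kf D" unfolding C_def by simp
    have vC: "K2.vge C 1" unfolding C_def using K2.vge_ofint[of 1 "- eps * (int p + 1)"] po by simp
    have "int 2 ^ 2 dvd - eps * (int p + 1)" using eps_cases p3 by (elim disjE; simp; presburger)
    hence "K2.vge (of_int (- eps * (int p + 1))) 2" using K2.vge_ofint by fastforce
    hence va: "K2.vge ((-1) * (1 - C) + 1) 2" unfolding C_def by (simp add: algebra_simps)
    have "\<not> loc_sol D 2 (gphi eps p q) (-2)"
    proof (rule K2.not_loc_sol[where N = 4])
      fix z w assume z: "z \<in> Kf D" and w: "w \<in> Kf D"
      have L: "2*(-1)*w^2 - 4*(z^4 - 2*C*z^2 + 1) \<noteq> 0 \<and> ordv D 2 (2*(-1)*w^2 - 4*(z^4 - 2*C*z^2 + 1)) \<le> 4"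
        by (rule K2.L2[OF refl _ _ CK vC va z w]) simp_all
      have eq: "-2 * w^2 - gphi eps p q (-2) z = 2*(-1)*w^2 - 4*(z^4 - 2*C*z^2 + 1)"
        unfolding C_def by (simp add: gphi_def qp algebra_simps)
      show "-2 * w^2 - gphi eps p q (-2) z \<noteq> 0 \<and> ordv D 2 (-2 * w^2 - gphi eps p q (-2) z) \<le> 4"
        unfolding eq by (rule L)
    qed
    thus False using sel unfolding Sel_phi_def by auto
  qed
qed

lemma part1': "\<forall>d \<in> KS2 D p q. odd (ordv D 2 d) \<longrightarrow> d \<notin> Sel_phihat D eps p q"
proof (intro ballI impI notI)
  fix d assume dS: "d \<in> KS2 D p q" and o: "odd (ordv D 2 d)" and sel: "d \<in> Sel_phihat D eps p q"
  have d: "d \<in> Kf D" "d \<noteq> 0" using KS2_mem[OF dS] by auto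
  define c :: complex where "c = of_int (eps*(int p + int q))"
  define e :: complex where "e = of_int (int p * int q)"
  have cK: "c \<in> Kf D" "e \<in> Kf D" unfolding c_def e_def by simp_all
  have g: "gphihat eps p q d z = d^2 + c * d * z^2 + e * z^4" for z
    unfolding c_def e_def gphihat_def by (simp add: algebra_simps)
  have "odd (int p * int q)" using po qo by simp
  hence "\<not> int 2 dvd int p * int q" by simp
  from K2.ord_int_unit[OF this] have "int p * int q \<noteq> 0 \<and> ordv D 2 (of_int (int p * int q)) = 0" .
  hence e0b: "ordv D 2 e = 0" unfolding e_def by blast
  have e0a: "e \<noteq> 0" unfolding e_def using po qo by (auto elim: oddE)
  note e0 = e0a e0b
  have vc: "K2.vge c 0" unfolding c_def by (rule K2.vge_int)
  have "\<not> loc_sol D 2 (gphihat eps p q) d"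
  proof (rule K2.not_loc_sol[where N = "2 * ordv D 2 d"])
    fix z w assume z: "z \<in> Kf D" and w: "w \<in> Kf D"
    have L: "d * w^2 - (d^2 + c*d*z^2 + e*z^4) \<noteq> 0 \<and> ordv D 2 (d * w^2 - (d^2 + c*d*z^2 + e*z^4)) \<le> 2 * ordv D 2 d"
      by (rule K2.L1[OF d o cK(1) vc cK(2) e0 z w])
    show "d * w^2 - gphihat eps p q d z \<noteq> 0 \<and> ordv D 2 (d * w^2 - gphihat eps p q d z) \<le> 2 * ordv D 2 d"
      unfolding g by (rule L)
  qed
  thus False using sel unfolding Sel_phihat_def by auto
qed

end

lemma hat_id:
  fixes cc B u S Pq :: complex
  assumes "cc \<noteq> 0" "cc + B = S" "cc * B = Pq"
  shows "(-1) * (0*u + 0)^2 - ((-1)^2 + S * (-1) * (inverse cc * u + 0)^2 + Pq * (inverse cc * u + 0)^4)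
       = (u^2 - cc) * (inverse cc * (1 - B * u^2 * (inverse cc)^2))"
  using assms(1) unfolding assms(2)[symmetric] assms(3)[symmetric]
  by (simp add: field_simps power2_eq_square power4_eq_xxxx)

context Setup begin

lemma gphihat_eq: "gphihat eps p q d z = d^2 + of_int eps * (of_nat p + of_nat q) * d * z^2 + of_nat p * of_nat q * z^4"
  unfolding gphihat_def ..

lemma part2'_m1: "-1 \<in> Sel_phihat D eps p q"
proof (rule Sel_phihat_I)
  show "-1 \<in> KS2 D p q" by (rule KS2_I[of _ 1 0 0 0]) simp
  show "loc_sol D p (gphihat eps p q) (-1)"
  proof (rule Kp.sol_sqrt[where c = "-1" and za = 0 and zb = 0 and wa = 1 and wb = 0 and H = "\<lambda>u. -1"])
    show "(odd p \<and> \<not> int p dvd -1) \<or> (p = 2 \<and> -1 mod 4 = 1 \<and> D mod 8 = 5)" using po p3 by simp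
    fix u assume "u \<in> Kf D" "Kp.vge u 0"
    show "-1 \<in> Kf D \<and> Kp.vge (-1) 0 \<and> -1 * (1*u + 0)^2 - gphihat eps p q (-1) (0*u + 0) = (u^2 - of_int (-1)) * -1"
      using Kp.vge_int[of "-1"] by (simp add: gphihat_def algebra_simps power2_eq_square)
  qed (auto simp: Kp.vge_int[of 0, simplified] Kp.vge_int[of 1, simplified])
  show "loc_sol D q (gphihat eps p q) (-1)"
  proof (rule Kq.sol_sqrt[where c = "-1" and za = 0 and zb = 0 and wa = 1 and wb = 0 and H = "\<lambda>u. -1"])
    have "q \<ge> 3" using qp p3 by simp
    thus "(odd q \<and> \<not> int q dvd -1) \<or> (q = 2 \<and> -1 mod 4 = 1 \<and> D mod 8 = 5)" using qo by simp
    fix u assume "u \<in> Kf D" "Kq.vge u 0"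
    show "-1 \<in> Kf D \<and> Kq.vge (-1) 0 \<and> -1 * (1*u + 0)^2 - gphihat eps p q (-1) (0*u + 0) = (u^2 - of_int (-1)) * -1"
      using Kq.vge_int[of "-1"] by (simp add: gphihat_def algebra_simps power2_eq_square)
  qed (auto simp: Kq.vge_int[of 0, simplified] Kq.vge_int[of 1, simplified])
  define r where "r = eps * (int p + 1)"
  define cc where "cc = (if (1 + r) mod 4 = 1 then 1 + r else r - 1)"
  define B where "B = 2 * r - cc"
  have er: "even r" unfolding r_def using po by simp
  have cc4: "cc mod 4 = 1"
  proof (cases "(1 + r) mod 4 = 1")
    case True thus ?thesis unfolding cc_def by simp
  next
    case False
    hence "(r - 1) mod 4 = 1" using er by presburger
    thus ?thesis using False unfolding cc_def by simp
  qed
  have ccodd: "\<not> int 2 dvd cc" using cc4 by presburger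
  have cc0: "(of_int cc :: complex) \<noteq> 0" using ccodd by auto
  have ccB: "cc * B = int p * int q"
  proof -
    have "(1 + r) * (r - 1) = int p * int q" unfolding r_def qp using eps_cases by (elim disjE) (simp_all add: algebra_simps)
    thus ?thesis unfolding B_def cc_def by (auto simp: algebra_simps)
  qed
  have ccS: "cc + B = eps * (int p + int q)" unfolding B_def r_def qp by (simp add: algebra_simps)
  have oic: "K2.vge (inverse (of_int cc)) 0"
    using K2.ord_inverse[of "of_int cc"] K2.ord_int_unit[OF ccodd] cc0 unfolding K2.vge_def by simp
  show "loc_sol D 2 (gphihat eps p q) (-1)"
  proof (rule K2.sol_sqrt[where c = cc and za = "inverse (of_int cc)" and zb = 0 and wa = 0 and wb = 0
        and H = "\<lambda>u. inverse (of_int cc) * (1 - of_int B * u^2 * (inverse (of_int cc))^2)"])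
    show "(odd 2 \<and> \<not> int 2 dvd cc) \<or> (2 = 2 \<and> cc mod 4 = 1 \<and> D mod 8 = 5)" using cc4 D8 by simp
    fix u assume u: "u \<in> Kf D" "K2.vge u 0"
    have "K2.vge (inverse (of_int cc) * (1 - of_int B * u^2 * (inverse (of_int cc))^2)) (0 + 0)"
    proof (rule K2.vge_mult[OF _ _ oic])
      have "K2.vge (of_int B * u^2 * (inverse (of_int cc))^2) (0 + int 2 * 0 + int 2 * 0)"
        using K2.vge_int[of B] K2.vge_power[OF u, of 2] K2.vge_power[OF _ oic, of 2] u
        by (intro K2.vge_mult) auto
      thus "K2.vge (1 - of_int B * u^2 * (inverse (of_int cc))^2) 0"
        using K2.vge_int[of 1] u by (intro K2.vge_diff) auto
    qed (use u in simp_all)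
    moreover have "-1 * (0*u + 0)^2 - gphihat eps p q (-1) (inverse (of_int cc) * u + 0)
        = (u^2 - of_int cc) * (inverse (of_int cc) * (1 - of_int B * u^2 * (inverse (of_int cc))^2))"
    proof -
      have S: "(of_int cc :: complex) + of_int B = of_int eps * (of_nat p + of_nat q)"
        using arg_cong[OF ccS, of "of_int :: int \<Rightarrow> complex"] by simp
      have P: "(of_int cc :: complex) * of_int B = of_nat p * of_nat q"
        using arg_cong[OF ccB, of "of_int :: int \<Rightarrow> complex"] by simp
      show ?thesis unfolding gphihat_eq using hat_id[OF cc0 S P, of u] by simp
    qed
    ultimately show "inverse (of_int cc) * (1 - of_int B * u^2 * (inverse (of_int cc))^2) \<in> Kf D \<and>
        K2.vge (inverse (of_int cc) * (1 - of_int B * u^2 * (inverse (of_int cc))^2)) 0 \<and>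
        -1 * (0*u + 0)^2 - gphihat eps p q (-1) (inverse (of_int cc) * u + 0)
        = (u^2 - of_int cc) * (inverse (of_int cc) * (1 - of_int B * u^2 * (inverse (of_int cc))^2))"
      using u by simp
  qed (use oic in \<open>auto simp: K2.vge_int[of 0, simplified]\<close>)
qed

lemma pq_mod4: "(int p * int q) mod 4 = 3"
proof -
  obtain k where k: "p = 2*k + 1" using po oddE by blast
  have "int p * int q = 4 * (int k * int k + 2 * int k) + 3" unfolding qp k by (simp add: algebra_simps)
  thus ?thesis by presburger
qed

lemma part2'_P:
  assumes PQ: "(P = p \<and> Q = q) \<or> (P = q \<and> Q = p)"
  shows "of_nat P \<in> Sel_phihat D eps p q"
proof -
  have iP: "inert D P" and iQ: "inert D Q" and oP: "odd P" and oQ: "odd Q" using PQ ip iq po qo by auto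
  interpret KP: Kval D P by unfold_locales (use Dneg D4 iP in auto)
  interpret KQ: Kval D Q by unfold_locales (use Dneg D4 iQ in auto)
  have P3: "P \<ge> 3" and Q3: "Q \<ge> 3" using PQ p3 qp by auto
  have sum: "of_nat p + of_nat q = (of_nat P + of_nat Q :: complex)" using PQ by auto
  have prod: "of_nat p * of_nat q = (of_nat P * of_nat Q :: complex)" using PQ by auto
  have g: "gphihat eps p q d z = d^2 + of_int eps * (of_nat P + of_nat Q) * d * z^2 + of_nat P * of_nat Q * z^4" for d z
    unfolding gphihat_def sum prod ..
  have ndQP: "\<not> int Q dvd int P"
  proof
    assume h: "int Q dvd int P"
    show False using PQ
    proof
      assume "P = p \<and> Q = q" hence "q dvd p" using h by simp
      hence "q \<le> p" using pp prime_gt_0_nat dvd_imp_le by blast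
      thus False using qp by simp
    next
      assume a: "P = q \<and> Q = p" hence "int p dvd int p + 2" using h qp by simp
      hence "int p dvd 2" by (simp add: dvd_add_right_iff)
      thus False using ndvd2 by simp
    qed
  qed
  have ndP: "\<not> int P dvd - eps"
  proof
    assume "int P dvd - eps"
    hence "int P dvd 1" using eps_cases by auto
    hence "int P \<le> 1" by (simp add: zdvd_imp_le)
    thus False using P3 by simp
  qed
  show ?thesis
  proof (rule Sel_phihat_I)
    show "of_nat P \<in> KS2 D p q" using PQ
    proof
      assume "P = p \<and> Q = q" thus ?thesis by (intro KS2_I[of _ 0 0 1 0]) simp
    next
      assume "P = q \<and> Q = p" thus ?thesis by (intro KS2_I[of _ 0 0 0 1]) simp
    qed
    have lP: "loc_sol D P (gphihat eps p q) (of_nat P)"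
    proof (rule KP.sol_sqrt[where c = "- eps" and za = 1 and zb = 0 and wa = 0 and wb = 0
          and H = "\<lambda>u. - of_nat P * (of_nat Q * u^2 + of_int eps * of_nat P)"])
      show "(odd P \<and> \<not> int P dvd - eps) \<or> (P = 2 \<and> - eps mod 4 = 1 \<and> D mod 8 = 5)" using oP ndP by simp
      fix u assume u: "u \<in> Kf D" "KP.vge u 0"
      have "KP.vge (- of_nat P * (of_nat Q * u^2 + of_int eps * of_nat P)) (0 + 0)"
      proof (rule KP.vge_mult)
        show "KP.vge (- of_nat P) 0" using KP.vge_int[of "- int P"] by simp
        have "KP.vge (of_nat Q * u^2) (0 + int 2 * 0)"
          using KP.vge_int[of "int Q"] KP.vge_power[OF u, of 2] u by (intro KP.vge_mult) auto
        thus "KP.vge (of_nat Q * u^2 + of_int eps * of_nat P) 0"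
          using KP.vge_int[of "eps * int P"] u by (intro KP.vge_add) auto
      qed (use u in simp_all)
      moreover have "of_nat P * (0*u + 0)^2 - gphihat eps p q (of_nat P) (1*u + 0)
          = (u^2 - of_int (- eps)) * (- of_nat P * (of_nat Q * u^2 + of_int eps * of_nat P))"
        unfolding g using eps_cases by (elim disjE) (simp_all add: algebra_simps power2_eq_square power4_eq_xxxx)
      ultimately show "- of_nat P * (of_nat Q * u^2 + of_int eps * of_nat P) \<in> Kf D \<and>
          KP.vge (- of_nat P * (of_nat Q * u^2 + of_int eps * of_nat P)) 0 \<and>
          of_nat P * (0*u + 0)^2 - gphihat eps p q (of_nat P) (1*u + 0)
          = (u^2 - of_int (- eps)) * (- of_nat P * (of_nat Q * u^2 + of_int eps * of_nat P))"
        using u by simp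
    qed (auto simp: KP.vge_int[of 0, simplified] KP.vge_int[of 1, simplified])
    have lQ: "loc_sol D Q (gphihat eps p q) (of_nat P)"
    proof (rule KQ.sol_sqrt[where c = "int P" and za = 0 and zb = 0 and wa = 1 and wb = 0
          and H = "\<lambda>u. of_nat P"])
      show "(odd Q \<and> \<not> int Q dvd int P) \<or> (Q = 2 \<and> int P mod 4 = 1 \<and> D mod 8 = 5)" using oQ ndQP by simp
      fix u assume u: "u \<in> Kf D" "KQ.vge u 0"
      show "of_nat P \<in> Kf D \<and> KQ.vge (of_nat P) 0 \<and>
          of_nat P * (1*u + 0)^2 - gphihat eps p q (of_nat P) (0*u + 0) = (u^2 - of_int (int P)) * of_nat P"
        using KQ.vge_int[of "int P"] by (simp add: g algebra_simps power2_eq_square)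
    qed (auto simp: KQ.vge_int[of 0, simplified] KQ.vge_int[of 1, simplified])
    have l2: "loc_sol D 2 (gphihat eps p q) (of_nat P)"
    proof (cases "eps = -1")
      case True
      show ?thesis
        by (rule K2.sol_exact[where zb = 1 and wb = 0]) (use True PQ qp in \<open>auto simp: gphihat_def algebra_simps power2_eq_square\<close>)
    next
      case False
      hence e1: "eps = 1" using eps_cases by simp
      have Qodd: "\<not> int 2 dvd int Q" using oQ by simp
      have Q0: "(of_nat Q :: complex) \<noteq> 0" using Q3 by simp
      have oiQ: "K2.vge (inverse (of_nat Q)) 0"
        using K2.ord_inverse[of "of_nat Q"] K2.ord_int_unit[OF Qodd] Q0 unfolding K2.vge_def by simp
      have "int P * int Q = int p * int q" using PQ by auto
      hence pqm: "(- (int P * int Q)) mod 4 = 1" using pq_mod4 by presburger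
      show ?thesis
      proof (rule K2.sol_sqrt[where c = "- (int P * int Q)" and za = "inverse (of_nat Q)" and zb = 0 and wa = 0 and wb = 0
          and H = "\<lambda>u. - of_nat P * inverse (of_nat Q) * ((inverse (of_nat Q) * u)^2 + 1)"])
        show "(odd 2 \<and> \<not> int 2 dvd - (int P * int Q)) \<or> (2 = 2 \<and> - (int P * int Q) mod 4 = 1 \<and> D mod 8 = 5)"
          using pqm D8 by simp
        fix u assume u: "u \<in> Kf D" "K2.vge u 0"
        have "K2.vge (- of_nat P * inverse (of_nat Q) * ((inverse (of_nat Q) * u)^2 + 1)) ((0 + 0) + 0)"
        proof (rule K2.vge_mult)
          show "K2.vge (- of_nat P * inverse (of_nat Q)) (0 + 0)"
            using K2.vge_int[of "- int P"] oiQ by (intro K2.vge_mult) auto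
          have "K2.vge ((inverse (of_nat Q) * u)^2) (int 2 * (0 + 0))"
            using oiQ u by (intro K2.vge_power K2.vge_mult) auto
          thus "K2.vge ((inverse (of_nat Q) * u)^2 + 1) 0"
            using K2.vge_int[of 1] u by (intro K2.vge_add) auto
        qed (use u in simp_all)
        moreover have "of_nat P * (0*u + 0)^2 - gphihat eps p q (of_nat P) (inverse (of_nat Q) * u + 0)
            = (u^2 - of_int (- (int P * int Q))) * (- of_nat P * inverse (of_nat Q) * ((inverse (of_nat Q) * u)^2 + 1))"
          unfolding g unfolding e1 using Q0
          by (simp add: field_simps power2_eq_square power4_eq_xxxx)
        ultimately show "- of_nat P * inverse (of_nat Q) * ((inverse (of_nat Q) * u)^2 + 1) \<in> Kf D \<and>
            K2.vge (- of_nat P * inverse (of_nat Q) * ((inverse (of_nat Q) * u)^2 + 1)) 0 \<and>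
            of_nat P * (0*u + 0)^2 - gphihat eps p q (of_nat P) (inverse (of_nat Q) * u + 0)
            = (u^2 - of_int (- (int P * int Q))) * (- of_nat P * inverse (of_nat Q) * ((inverse (of_nat Q) * u)^2 + 1))"
          using u by simp
      qed (use oiQ in \<open>auto simp: K2.vge_int[of 0, simplified]\<close>)
    qed
    show "loc_sol D 2 (gphihat eps p q) (of_nat P)" by (rule l2)
    show "loc_sol D p (gphihat eps p q) (of_nat P)" using PQ lP lQ by auto
    show "loc_sol D q (gphihat eps p q) (of_nat P)" using PQ lP lQ by auto
  qed
qed

end

theorem proposition2p5:
  fixes p q :: nat and D eps :: int
  assumes "prime p" "prime q" "odd p" "odd q" "q = p + 2"
    and "D \<in> {-11, -19, -43, -67, -163}"
    and "inert D p" "inert D q"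
    and "eps \<in> {1, -1}"
  shows "(\<forall>d \<in> KS2 D p q. (odd (ordv D p d) \<or> odd (ordv D q d) \<or> (\<exists>t \<in> Kf D. d = - (t^2)))
            \<longrightarrow> d \<notin> Sel_phi D eps p q)
       \<and> ((2 \<in> Sel_phi D eps p q) \<longleftrightarrow> p mod 4 = 3)
       \<and> ((-2 \<in> Sel_phi D eps p q) \<longleftrightarrow> p mod 4 = 1)
       \<and> (\<forall>d \<in> KS2 D p q. odd (ordv D 2 d) \<longrightarrow> d \<notin> Sel_phihat D eps p q)
       \<and> -1 \<in> Sel_phihat D eps p q \<and> of_nat p \<in> Sel_phihat D eps p q
       \<and> of_nat q \<in> Sel_phihat D eps p q"
  proof -
  interpret S: Setup p q D eps by unfold_locales (use assms in auto)
  show ?thesis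
    using S.part1 S.part2a S.part2b S.part1' S.part2'_m1 S.part2'_P[of p q] S.part2'_P[of q p] by auto
qed

end
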